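(* Let $G$ be a connected graph and $K\subseteq V(G)$ a nonempty set of vertices inducing a clique in $G$, and let $G_K$ be obtained from $G$ by adding a new vertex $x$ with $N_{G_K}(x)=K$. Let $\mathcal{R}_0=\{T(0,x,v_{\lambda(T)})\mid T\in V(\mathcal{R}(G))\}$ and $\mathcal{R}_1=\{T(\lambda(T)+1,x,v_{\lambda(T)})\mid T\in V(\mathcal{R}(G))\}$. Then $\mathcal{R}_0$ and $\mathcal{R}_1$ each induce a subgraph of $\mathcal{R}(G_K)$ isomorphic to $\mathcal{R}(G)$.
   Context: For a connected graph $G$, a search tree on $G$ is a rooted tree with vertex set $V(G)$ defined recursively: its root is some vertex $r\in V(G)$, and the children of $r$ are the roots of search trees on the connected components of $G-r$. For a rooted tree $T$ and $w\in V(T)$, $T|w$ denotes the subtree rooted at $w$. Let $T$ be a search tree on $G$, let $v$ be a child of $u$ in $T$, and let $p$ be the parent of $u$ (if it exists). The $uv$-rotation transforms $T$ into the search tree $T'$ in which: $u$ is a child of $v$ and $v$ is a child of $p$ (or $v$ is the root if $u$ was the root); every subtree of $u$ in $T$ other than $T|v$ is a subtree of $u$ in $T'$; and every subtree $S$ of $v$ in $T$ is a subtree of $u$ in $T'$ if $u$ is adjacent in $G$ to some vertex of $S$, and a subtree of $v$ in $T'$ otherwise. The rotation graph $\mathcal{R}(G)$ is the graph whose vertices are the search trees on $G$, two being adjacent iff they differ by one rotation. For a rooted tree $T$ with root $r_T$ and $w\in V(T)$, $d_{T,w}$ is the distance from $r_T$ to $w$. For a search tree $T$ on $G$, $\lambda(T)=\max\{d_{T,u}\mid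 u\in K\}$ and $v_{\lambda(T)}$ is the unique vertex of $K$ at depth $\lambda(T)$ (vertices of a clique lie on a common root-to-leaf path). Insertion: for a rooted tree $T$, $v\in V(T)$ with $d=d_{T,v}$ and root-to-$v$ path $a_0,\ldots,a_d=v$, and $x\notin V(T)$: $T(0,x,v)$ has $x$ as new root with $T$ as its only subtree; for $1\le i\le d$, $T(i,x,v)$ subdivides the edge $a_{i-1}a_i$ by $x$; $T(d+1,x,v)$ adds $x$ as a new leaf child of $v$. *)

theory Defs
  imports Main "HOL-Library.FSet"
begin

definition graph :: "'a set \<Rightarrow> ('a \<Rightarrow> 'a \<Rightarrow> bool) \<Rightarrow> bool" where
  "graph V E \<longleftrightarrow> finite V \<and> (\<forall>a b. E a b \<longrightarrow> a \<in> V \<and> b \<in> V \<and> a \<noteq> b \<and> E b a)"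

definition reach_in :: "'a set \<Rightarrow> ('a \<Rightarrow> 'a \<Rightarrow> bool) \<Rightarrow> 'a \<Rightarrow> 'a \<Rightarrow> bool" where
  "reach_in S E = (\<lambda>p q. E p q \<and> p \<in> S \<and> q \<in> S)\<^sup>*\<^sup>*"

definition connected_on :: "'a set \<Rightarrow> ('a \<Rightarrow> 'a \<Rightarrow> bool) \<Rightarrow> bool" where
  "connected_on S E \<longleftrightarrow> S \<noteq> {} \<and> (\<forall>a\<in>S. \<forall>b\<in>S. reach_in S E a b)"

definition components_on :: "'a set \<Rightarrow> ('a \<Rightarrow> 'a \<Rightarrow> bool) \<Rightarrow> 'a set set" where
  "components_on S E = (\<lambda>a. {b \<in> S. reach_in S E a b}) ` S"

definition is_clique :: "'a set \<Rightarrow> ('a \<Rightarrow> 'a \<Rightarrow> bool) \<Rightarrow> bool" where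
  "is_clique K E \<longleftrightarrow> (\<forall>a\<in>K. \<forall>b\<in>K. a \<noteq> b \<longrightarrow> E a b)"

definition add_vertex_edges :: "('a \<Rightarrow> 'a \<Rightarrow> bool) \<Rightarrow> 'a set \<Rightarrow> 'a \<Rightarrow> ('a \<Rightarrow> 'a \<Rightarrow> bool)" where
  "add_vertex_edges E K x = (\<lambda>a b. E a b \<or> (a = x \<and> b \<in> K) \<or> (b = x \<and> a \<in> K))"

datatype 'a rtree = Node (root: 'a) (kids: "'a rtree fset")

inductive subtree_of :: "'a rtree \<Rightarrow> 'a rtree \<Rightarrow> bool" where
  refl: "subtree_of T T"
| kid: "C |\<in>| Cs \<Longrightarrow> subtree_of S C \<Longrightarrow> subtree_of S (Node r Cs)"

definition tverts :: "'a rtree \<Rightarrow> 'a set" where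
  "tverts T = root ` {S. subtree_of S T}"

inductive path_to :: "'a rtree \<Rightarrow> 'a \<Rightarrow> 'a list \<Rightarrow> bool" where
  here: "path_to (Node r Cs) r [r]"
| down: "C |\<in>| Cs \<Longrightarrow> path_to C w p \<Longrightarrow> path_to (Node r Cs) w (r # p)"

definition root_path :: "'a rtree \<Rightarrow> 'a \<Rightarrow> 'a list" where
  "root_path T w = (THE p. path_to T w p)"

definition depth :: "'a rtree \<Rightarrow> 'a \<Rightarrow> nat" where
  "depth T w = length (root_path T w) - 1"

inductive search_tree :: "('a \<Rightarrow> 'a \<Rightarrow> bool) \<Rightarrow> 'a set \<Rightarrow> 'a rtree \<Rightarrow> bool" for E where
  "connected_on V E \<Longrightarrow> r \<in> V \<Longrightarrow>
   (\<forall>C. C |\<in>| Cs \<longrightarrow> search_tree E (tverts C) C) \<Longrightarrow>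
   inj_on tverts (fset Cs) \<Longrightarrow>
   tverts ` fset Cs = components_on (V - {r}) E \<Longrightarrow>
   search_tree E V (Node r Cs)"

definition touches :: "('a \<Rightarrow> 'a \<Rightarrow> bool) \<Rightarrow> 'a \<Rightarrow> 'a rtree \<Rightarrow> bool" where
  "touches E u S \<longleftrightarrow> (\<exists>w\<in>tverts S. E u w)"

text \<open>rotation E u v T T': T' arises from T by the uv-rotation (v a child of u).
The subtree T|u is replaced by the rotated subtree rooted at v; the parent of u
(if any) becomes the parent of v.\<close>
inductive rotation :: "('a \<Rightarrow> 'a \<Rightarrow> bool) \<Rightarrow> 'a \<Rightarrow> 'a \<Rightarrow> 'a rtree \<Rightarrow> 'a rtree \<Rightarrow> bool"
  for E where
  at_u: "Node v Ds |\<in>| Cs \<Longrightarrow>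
    rotation E u v (Node u Cs)
      (Node v (ffilter (\<lambda>S. \<not> touches E u S) Ds |\<union>|
               {| Node u ((Cs |-| {|Node v Ds|}) |\<union>| ffilter (touches E u) Ds) |}))"
| below: "C |\<in>| Cs \<Longrightarrow> rotation E u v C C' \<Longrightarrow>
    rotation E u v (Node w Cs) (Node w (finsert C' (Cs |-| {|C|})))"

definition rot_verts :: "'a set \<Rightarrow> ('a \<Rightarrow> 'a \<Rightarrow> bool) \<Rightarrow> 'a rtree set" where
  "rot_verts V E = {T. search_tree E V T}"

definition rot_adj :: "'a set \<Rightarrow> ('a \<Rightarrow> 'a \<Rightarrow> bool) \<Rightarrow> 'a rtree \<Rightarrow> 'a rtree \<Rightarrow> bool" where
  "rot_adj V E T T' \<longleftrightarrow> T \<in> rot_verts V E \<and> T' \<in> rot_verts V E \<and> (\<exists>u v. rotation E u v T T')"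

primrec map_at :: "'a \<Rightarrow> ('a rtree \<Rightarrow> 'a rtree) \<Rightarrow> 'a rtree \<Rightarrow> 'a rtree" where
  "map_at a f (Node w Cs) = (if w = a then f (Node w Cs) else Node w (fimage (map_at a f) Cs))"

definition insertion :: "'a rtree \<Rightarrow> nat \<Rightarrow> 'a \<Rightarrow> 'a \<Rightarrow> 'a rtree" where
  "insertion T i x v =
    (if i = 0 then Node x {|T|}
     else if i \<le> depth T v then map_at (root_path T v ! i) (\<lambda>S. Node x {|S|}) T
     else map_at v (\<lambda>S. Node (root S) (finsert (Node x {||}) (kids S))) T)"

definition lam :: "'a set \<Rightarrow> 'a rtree \<Rightarrow> nat" where
  "lam K T = Max (depth T ` K)"

definition v_lam :: "'a set \<Rightarrow> 'a rtree \<Rightarrow> 'a" where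
  "v_lam K T = (THE u. u \<in> K \<and> depth T u = lam K T)"

definition induces_copy_of :: "'a rtree set \<Rightarrow> 'a set \<Rightarrow> ('a \<Rightarrow> 'a \<Rightarrow> bool) \<Rightarrow>
    'a set \<Rightarrow> ('a \<Rightarrow> 'a \<Rightarrow> bool) \<Rightarrow> bool" where
  "induces_copy_of R V' E' V E \<longleftrightarrow> R \<subseteq> rot_verts V' E' \<and>
     (\<exists>\<phi>. bij_betw \<phi> (rot_verts V E) R \<and>
        (\<forall>T\<in>rot_verts V E. \<forall>T'\<in>rot_verts V E.
            rot_adj V E T T' \<longleftrightarrow> rot_adj V' E' (\<phi> T) (\<phi> T')))"

end

theory Submission
  imports Defs
begin

lemma subtree_of_Node_iff:
  "subtree_of S (Node r Cs) \<longleftrightarrow> S = Node r Cs \<or> (\<exists>C. C |\<in>| Cs \<and> subtree_of S C)"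
  by (auto elim: subtree_of.cases intro: subtree_of.intros)

lemma tverts_Node: "tverts (Node r Cs) = insert r (\<Union>C\<in>fset Cs. tverts C)"
  unfolding tverts_def
  apply (simp add: subtree_of_Node_iff)
  apply (auto intro: rev_image_eqI)
  done

lemma root_in_tverts: "root T \<in> tverts T"
  by (cases T) (simp add: tverts_Node)

lemma kid_tverts_sub: "C |\<in>| Cs \<Longrightarrow> tverts C \<subseteq> tverts (Node r Cs)"
  by (auto simp: tverts_Node)

inductive dl :: "'a rtree \<Rightarrow> bool" where
  "(\<forall>C. C |\<in>| Cs \<longrightarrow> dl C \<and> r \<notin> tverts C) \<Longrightarrow>
   (\<forall>C1 C2. C1 |\<in>| Cs \<longrightarrow> C2 |\<in>| Cs \<longrightarrow> C1 \<noteq> C2 \<longrightarrow> tverts C1 \<inter> tverts C2 = {}) \<Longrightarrow>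
   dl (Node r Cs)"

lemma dl_Node: "dl (Node r Cs) \<longleftrightarrow> (\<forall>C. C |\<in>| Cs \<longrightarrow> dl C \<and> r \<notin> tverts C) \<and>
   (\<forall>C1 C2. C1 |\<in>| Cs \<longrightarrow> C2 |\<in>| Cs \<longrightarrow> C1 \<noteq> C2 \<longrightarrow> tverts C1 \<inter> tverts C2 = {})"
proof
  assume "dl (Node r Cs)"
  then show "(\<forall>C. C |\<in>| Cs \<longrightarrow> dl C \<and> r \<notin> tverts C) \<and>
   (\<forall>C1 C2. C1 |\<in>| Cs \<longrightarrow> C2 |\<in>| Cs \<longrightarrow> C1 \<noteq> C2 \<longrightarrow> tverts C1 \<inter> tverts C2 = {})"
    by (rule dl.cases) auto
next
  assume a: "(\<forall>C. C |\<in>| Cs \<longrightarrow> dl C \<and> r \<notin> tverts C) \<and>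
   (\<forall>C1 C2. C1 |\<in>| Cs \<longrightarrow> C2 |\<in>| Cs \<longrightarrow> C1 \<noteq> C2 \<longrightarrow> tverts C1 \<inter> tverts C2 = {})"
  show "dl (Node r Cs)" by (rule dl.intros) (use a in auto)
qed

lemma dl_kid_eq: "dl (Node r Cs) \<Longrightarrow> C1 |\<in>| Cs \<Longrightarrow> C2 |\<in>| Cs \<Longrightarrow> a \<in> tverts C1 \<Longrightarrow> a \<in> tverts C2 \<Longrightarrow> C1 = C2"
proof (rule ccontr)
  assume "dl (Node r Cs)" "C1 |\<in>| Cs" "C2 |\<in>| Cs" "a \<in> tverts C1" "a \<in> tverts C2" "C1 \<noteq> C2"
  then show False unfolding dl_Node by (metis disjoint_iff)
qed

definition cls :: "'a set \<Rightarrow> ('a \<Rightarrow> 'a \<Rightarrow> bool) \<Rightarrow> 'a \<Rightarrow> 'a set" where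
  "cls S R a = {b \<in> S. reach_in S R a b}"

lemma components_cls: "components_on S R = cls S R ` S"
  unfolding components_on_def cls_def by simp

lemma reach_refl[simp]: "reach_in S R a a"
  unfolding reach_in_def by simp

lemma reach_step: "R a b \<Longrightarrow> a \<in> S \<Longrightarrow> b \<in> S \<Longrightarrow> reach_in S R a b"
  unfolding reach_in_def by auto

lemma reach_trans: "reach_in S R a b \<Longrightarrow> reach_in S R b c \<Longrightarrow> reach_in S R a c"
  unfolding reach_in_def by auto

lemma reach_sym: "symp R \<Longrightarrow> reach_in S R a b \<Longrightarrow> reach_in S R b a"
proof -
  assume s: "symp R" and r: "reach_in S R a b"
  have "symp (\<lambda>p q. R p q \<and> p \<in> S \<and> q \<in> S)" using s by (auto simp: symp_def)
  hence "symp (reach_in S R)" unfolding reach_in_def by (rule symp_rtranclp)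
  thus ?thesis using r by (auto simp: symp_def)
qed

lemma reach_closed:
  assumes "reach_in S R a b" "a \<in> P"
    "\<And>y z. y \<in> P \<Longrightarrow> R y z \<Longrightarrow> y \<in> S \<Longrightarrow> z \<in> S \<Longrightarrow> z \<in> P"
  shows "b \<in> P"
  using assms(1,2) unfolding reach_in_def
  by (induction rule: rtranclp_induct) (auto intro: assms(3))

lemma reach_in_S: "reach_in S R a b \<Longrightarrow> a \<in> S \<Longrightarrow> b \<in> S"
  using reach_closed[of S R a b S] by blast

lemma reach_mono:
  assumes "reach_in S R a b" "S \<subseteq> S'" "\<And>p q. p \<in> S \<Longrightarrow> q \<in> S \<Longrightarrow> R p q \<Longrightarrow> R' p q"
  shows "reach_in S' R' a b"
proof -
  have le: "(\<lambda>p q. R p q \<and> p \<in> S \<and> q \<in> S) \<le> (\<lambda>p q. R' p q \<and> p \<in> S' \<and> q \<in> S')"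
    using assms(2,3) by auto
  show ?thesis unfolding reach_in_def
    by (rule predicate2D[OF rtranclp_mono[OF le] assms(1)[unfolded reach_in_def]])
qed

lemma part_char:
  assumes ne: "\<And>Q. Q \<in> P \<Longrightarrow> Q \<noteq> {} \<and> Q \<subseteq> S"
    and cov: "\<And>a. a \<in> S \<Longrightarrow> \<exists>Q\<in>P. a \<in> Q"
    and clo: "\<And>Q a b. Q \<in> P \<Longrightarrow> a \<in> Q \<Longrightarrow> R a b \<Longrightarrow> b \<in> S \<Longrightarrow> b \<in> Q"
    and con: "\<And>Q a b. Q \<in> P \<Longrightarrow> a \<in> Q \<Longrightarrow> b \<in> Q \<Longrightarrow> reach_in S R a b"
  shows "components_on S R = P"
proof -
  have key: "cls S R a = Q" if "Q \<in> P" "a \<in> Q" for Q a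
  proof
    show "Q \<subseteq> cls S R a" using that ne con unfolding cls_def by blast
    show "cls S R a \<subseteq> Q"
    proof
      fix b assume "b \<in> cls S R a"
      hence "reach_in S R a b" unfolding cls_def by blast
      thus "b \<in> Q"
        by (rule reach_closed[OF _ that(2)]) (use clo that in blast)
    qed
  qed
  show ?thesis unfolding components_cls
  proof
    show "cls S R ` S \<subseteq> P" using cov key by blast
    show "P \<subseteq> cls S R ` S"
    proof
      fix Q assume q: "Q \<in> P"
      then obtain a where "a \<in> Q" using ne by blast
      thus "Q \<in> cls S R ` S" using key[OF q] ne[OF q] by blast
    qed
  qed
qed

lemma comp_props:
  assumes s: "symp R" and q: "Q \<in> components_on S R"
  shows "Q \<noteq> {}" "Q \<subseteq> S" "\<And>a. a \<in> Q \<Longrightarrow> Q = cls S R a"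
    "\<And>a b. a \<in> Q \<Longrightarrow> R a b \<Longrightarrow> b \<in> S \<Longrightarrow> b \<in> Q"
    "\<And>a b. a \<in> Q \<Longrightarrow> b \<in> Q \<Longrightarrow> reach_in S R a b"
proof -
  obtain c where c: "c \<in> S" "Q = cls S R c" using q unfolding components_cls by blast
  show "Q \<noteq> {}" "Q \<subseteq> S" using c unfolding cls_def by auto
  show eq: "Q = cls S R a" if "a \<in> Q" for a
  proof -
    have ca: "reach_in S R c a" using that c unfolding cls_def by auto
    have ac: "reach_in S R a c" using reach_sym[OF s ca] .
    show ?thesis using c ca ac unfolding cls_def by (auto intro: reach_trans)
  qed
  show "b \<in> Q" if "a \<in> Q" "R a b" "b \<in> S" for a b
    using eq[OF that(1)] that unfolding cls_def by (auto intro: reach_trans reach_step)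
  show "reach_in S R a b" if "a \<in> Q" "b \<in> Q" for a b
    using eq[OF that(1)] that unfolding cls_def by auto
qed

lemma comp_cover: "a \<in> S \<Longrightarrow> cls S R a \<in> components_on S R \<and> a \<in> cls S R a"
  unfolding components_cls cls_def by auto

lemma comp_Union: assumes "symp R" shows "\<Union>(components_on S R) = S"
proof
  show "\<Union>(components_on S R) \<subseteq> S" using comp_props(2)[OF assms] by blast
  show "S \<subseteq> \<Union>(components_on S R)" using comp_cover by (metis UnionI subsetI)
qed

lemma comp_disj: "symp R \<Longrightarrow> Q1 \<in> components_on S R \<Longrightarrow> Q2 \<in> components_on S R \<Longrightarrow>
  a \<in> Q1 \<Longrightarrow> a \<in> Q2 \<Longrightarrow> Q1 = Q2"
proof -
  assume s: "symp R" and q: "Q1 \<in> components_on S R" "Q2 \<in> components_on S R" "a \<in> Q1" "a \<in> Q2"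
  show ?thesis using comp_props(3)[OF s q(1) q(3)] comp_props(3)[OF s q(2) q(4)] by (rule trans[OF _ sym])
qed

lemma comp_connected: assumes "connected_on S R" shows "components_on S R = {S}"
proof (rule part_char)
  show "Q \<noteq> {} \<and> Q \<subseteq> S" if "Q \<in> {S}" for Q using assms that unfolding connected_on_def by simp
  show "\<exists>Q\<in>{S}. a \<in> Q" if "a \<in> S" for a using that by simp
  show "b \<in> Q" if "Q \<in> {S}" "a \<in> Q" "R a b" "b \<in> S" for Q a b using that by simp
  show "reach_in S R a b" if "Q \<in> {S}" "a \<in> Q" "b \<in> Q" for Q a b using assms that unfolding connected_on_def by simp
qed

lemma comp_sub: "Q \<in> components_on S R \<Longrightarrow> Q \<subseteq> S"
  unfolding components_cls cls_def by auto

lemma reach_cong: "(\<And>p q. p \<in> S \<Longrightarrow> q \<in> S \<Longrightarrow> R1 p q = R2 p q) \<Longrightarrow> reach_in S R1 = reach_in S R2"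
proof -
  assume a: "\<And>p q. p \<in> S \<Longrightarrow> q \<in> S \<Longrightarrow> R1 p q = R2 p q"
  have "(\<lambda>p q. R1 p q \<and> p \<in> S \<and> q \<in> S) = (\<lambda>p q. R2 p q \<and> p \<in> S \<and> q \<in> S)"
    using a by (intro ext) blast
  thus ?thesis unfolding reach_in_def by simp
qed

lemma comps_cong: "(\<And>p q. p \<in> S \<Longrightarrow> q \<in> S \<Longrightarrow> R1 p q = R2 p q) \<Longrightarrow> components_on S R1 = components_on S R2"
proof -
  assume a: "\<And>p q. p \<in> S \<Longrightarrow> q \<in> S \<Longrightarrow> R1 p q = R2 p q"
  have "reach_in S R1 = reach_in S R2" by (rule reach_cong[OF a])
  thus ?thesis unfolding components_on_def by simp
qed

lemma conn_cong: "(\<And>p q. p \<in> S \<Longrightarrow> q \<in> S \<Longrightarrow> R1 p q = R2 p q) \<Longrightarrow> connected_on S R1 = connected_on S R2"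
proof -
  assume a: "\<And>p q. p \<in> S \<Longrightarrow> q \<in> S \<Longrightarrow> R1 p q = R2 p q"
  have "reach_in S R1 = reach_in S R2" by (rule reach_cong[OF a])
  thus ?thesis unfolding connected_on_def by simp
qed

lemma st_basic:
  assumes "search_tree R S T" "symp R"
  shows "tverts T = S \<and> dl T"
  using assms(1)
proof (induction rule: search_tree.induct)
  case (1 V r Cs)
  note h = "1"
  have sub: "tverts C \<subseteq> V - {r}" if "C |\<in>| Cs" for C
    using comp_sub that h(4) by blast
  have eqU: "(\<Union>C\<in>fset Cs. tverts C) = V - {r}"
    using comp_Union[OF assms(2), of "V - {r}"] h(4) by simp
  have tv: "tverts (Node r Cs) = V" using eqU h(2) by (auto simp: tverts_Node)
  have "dl (Node r Cs)"
  proof (rule dl.intros)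
    show "\<forall>C. C |\<in>| Cs \<longrightarrow> dl C \<and> r \<notin> tverts C" using h(5) sub by blast
    show "\<forall>C1 C2. C1 |\<in>| Cs \<longrightarrow> C2 |\<in>| Cs \<longrightarrow> C1 \<noteq> C2 \<longrightarrow> tverts C1 \<inter> tverts C2 = {}"
    proof (intro allI impI)
      fix C1 C2 assume c: "C1 |\<in>| Cs" "C2 |\<in>| Cs" "C1 \<noteq> C2"
      have ne: "tverts C1 \<noteq> tverts C2" using h(3) c by (meson inj_onD)
      have m: "tverts C1 \<in> components_on (V - {r}) R" "tverts C2 \<in> components_on (V - {r}) R"
        using h(4) c by auto
      show "tverts C1 \<inter> tverts C2 = {}" using comp_disj[OF assms(2) m] ne by blast
    qed
  qed
  thus ?case using tv by simp
qed

lemma st_transfer: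
  assumes "search_tree R1 S T" "\<And>p q. p \<in> S \<Longrightarrow> q \<in> S \<Longrightarrow> R1 p q = R2 p q"
  shows "search_tree R2 S T"
  using assms
proof (induction rule: search_tree.induct)
  case (1 V r Cs)
  note h = "1"
  have sub: "tverts C \<subseteq> V" if "C |\<in>| Cs" for C
    using comp_sub that h(4) by blast
  show ?case
  proof (rule search_tree.intros)
    show "connected_on V R2" using h(1) conn_cong[of V R1 R2] h(6) by blast
    show "r \<in> V" by (rule h(2))
    show "\<forall>C. C |\<in>| Cs \<longrightarrow> search_tree R2 (tverts C) C"
      using h(5) sub h(6) by (meson subsetD)
    show "inj_on tverts (fset Cs)" by (rule h(3))
    show "tverts ` fset Cs = components_on (V - {r}) R2"
      using h(4) comps_cong[of "V - {r}" R1 R2] h(6) by simp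
  qed
qed

lemma path_to_Node: "path_to (Node r Cs) w p \<longleftrightarrow>
   (w = r \<and> p = [r]) \<or> (\<exists>C q. C |\<in>| Cs \<and> path_to C w q \<and> p = r # q)"
proof
  assume "path_to (Node r Cs) w p"
  thus "(w = r \<and> p = [r]) \<or> (\<exists>C q. C |\<in>| Cs \<and> path_to C w q \<and> p = r # q)"
    by (rule path_to.cases) auto
next
  assume "(w = r \<and> p = [r]) \<or> (\<exists>C q. C |\<in>| Cs \<and> path_to C w q \<and> p = r # q)"
  thus "path_to (Node r Cs) w p" by (auto intro: path_to.intros)
qed

lemma path_props: "path_to T w p \<Longrightarrow> w \<in> tverts T \<and> set p \<subseteq> tverts T \<and> p \<noteq> [] \<and> last p = w \<and> hd p = root T"
proof (induction rule: path_to.induct)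
  case (here r Cs)
  then show ?case by (simp add: tverts_Node)
next
  case (down C Cs w p r)
  then show ?case using kid_tverts_sub[OF down(1), of r] by (auto simp: tverts_Node)
qed

lemma path_exists: "w \<in> tverts T \<Longrightarrow> \<exists>p. path_to T w p"
proof (induction T)
  case (Node r Cs)
  show ?case
  proof (cases "w = r")
    case True thus ?thesis using path_to.here[of r Cs] by blast
  next
    case False
    then obtain C where "C |\<in>| Cs" "w \<in> tverts C" using Node.prems by (auto simp: tverts_Node)
    with Node.IH obtain q where "path_to C w q" by blast
    thus ?thesis using path_to.down[OF \<open>C |\<in>| Cs\<close>] by blast
  qed
qed

lemma path_unique: "path_to T w p \<Longrightarrow> dl T \<Longrightarrow> path_to T w q \<Longrightarrow> p = q"
proof (induction arbitrary: q rule: path_to.induct)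
  case (here r Cs)
  show ?case using here.prems unfolding path_to_Node dl_Node
    by (metis path_props)
next
  case (down C Cs w p r)
  from down.prems(2) have "(w = r \<and> q = [r]) \<or> (\<exists>C q'. C |\<in>| Cs \<and> path_to C w q' \<and> q = r # q')"
    unfolding path_to_Node .
  moreover have "w \<noteq> r" using down.hyps path_props down.prems(1) unfolding dl_Node by metis
  ultimately obtain C2 q' where c: "C2 |\<in>| Cs" "path_to C2 w q'" "q = r # q'" by blast
  have "C2 = C" using dl_kid_eq[OF down.prems(1) c(1) down.hyps(1)] path_props c(2) down.hyps(2) by metis
  moreover have "dl C" using down.prems(1) down.hyps(1) unfolding dl_Node by blast
  ultimately show ?case using down.IH c by simp
qed

lemma path_prefix: "path_to T b p \<Longrightarrow> a \<in> set p \<Longrightarrow> \<exists>q s. path_to T a q \<and> p = q @ s"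
proof (induction arbitrary: a rule: path_to.induct)
  case (here r Cs)
  hence "a = r" by simp
  thus ?case using path_to.here[of r Cs] by (intro exI[of _ "[r]"] exI[of _ "[]"]) simp
next
  case (down C Cs w p r)
  show ?case
  proof (cases "a = r")
    case True
    thus ?thesis by (intro exI[of _ "[r]"] exI[of _ p]) (simp add: path_to.here)
  next
    case False
    hence "a \<in> set p" using down.prems by simp
    then obtain q s where qs: "path_to C a q" "p = q @ s" using down.IH by blast
    show ?thesis using path_to.down[OF down.hyps(1) qs(1)] qs(2)
      by (intro exI[of _ "r # q"] exI[of _ s]) simp
  qed
qed

lemma root_path_eq: assumes "dl T" "path_to T w p" shows "root_path T w = p"
  unfolding root_path_def
proof (rule the_equality)
  show "path_to T w p" by (rule assms(2))
  show "q = p" if "path_to T w q" for q using path_unique[OF that assms(1) assms(2)] .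
qed

lemma depth_eq: "dl T \<Longrightarrow> path_to T w p \<Longrightarrow> depth T w = length p - 1"
  unfolding depth_def by (simp add: root_path_eq)

lemma anc_depth:
  assumes "dl T" "path_to T b p" "a \<in> set p" "a \<noteq> b"
  shows "depth T a < depth T b"
proof -
  obtain q s where qs: "path_to T a q" "p = q @ s" using path_prefix[OF assms(2,3)] by blast
  have "s \<noteq> []"
  proof
    assume "s = []" hence "p = q" using qs(2) by simp
    thus False using path_props[OF qs(1)] path_props[OF assms(2)] assms(4) by simp
  qed
  moreover have "q \<noteq> []" using path_props[OF qs(1)] by blast
  ultimately have "length q - 1 < length p - 1" using qs(2) by (cases q; cases s) auto
  thus ?thesis using depth_eq[OF assms(1) qs(1)] depth_eq[OF assms(1,2)] by simp
qed

lemma comparable: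
  assumes "search_tree R S T" "symp R"
  shows "R a b \<Longrightarrow> a \<in> S \<Longrightarrow> b \<in> S \<Longrightarrow> path_to T a p \<Longrightarrow> path_to T b q \<Longrightarrow> a \<in> set q \<or> b \<in> set p"
  using assms(1)
proof (induction arbitrary: a b p q rule: search_tree.induct)
  case (1 V r Cs)
  note h = "1"
  have hq: "hd q = r" "q \<noteq> []" using path_props[OF h(10)] by auto
  have hp: "hd p = r" "p \<noteq> []" using path_props[OF h(9)] by auto
  show ?case
  proof (cases "a = r \<or> b = r")
    case True
    thus ?thesis using hd_in_set[OF hq(2)] hd_in_set[OF hp(2)] hq(1) hp(1) by auto
  next
    case False
    obtain C p' where c: "C |\<in>| Cs" "path_to C a p'" "p = r # p'"
      using h(9) False unfolding path_to_Node by blast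
    obtain C' q' where c': "C' |\<in>| Cs" "path_to C' b q'" "q = r # q'"
      using h(10) False unfolding path_to_Node by blast
    have m: "tverts C \<in> components_on (V - {r}) R" "tverts C' \<in> components_on (V - {r}) R"
      using h(4) c(1) c'(1) by auto
    have aC: "a \<in> tverts C" using path_props[OF c(2)] by blast
    have bC': "b \<in> tverts C'" using path_props[OF c'(2)] by blast
    have bV: "b \<in> V - {r}" using h(8) False by simp
    have bC: "b \<in> tverts C" using comp_props(4)[OF assms(2) m(1) aC h(6) bV] .
    have "tverts C = tverts C'" using comp_disj[OF assms(2) m bC bC'] .
    hence "C = C'" using h(3) c(1) c'(1) by (meson inj_onD)
    have ih: "search_tree R (tverts C) C \<and> (\<forall>a b p q. R a b \<longrightarrow> a \<in> tverts C \<longrightarrow> b \<in> tverts C \<longrightarrow> path_to C a p \<longrightarrow> path_to C b q \<longrightarrow> a \<in> set q \<or> b \<in> set p)"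
      using h(5) c(1) by blast
    have "a \<in> set q' \<or> b \<in> set p'" using ih h(6) aC bC c(2) c'(2) \<open>C = C'\<close> by blast
    thus ?thesis using c c' by auto
  qed
qed

definition addl :: "'a \<Rightarrow> 'a \<Rightarrow> 'a rtree \<Rightarrow> 'a rtree" where
  "addl x a = map_at a (\<lambda>S. Node (root S) (finsert (Node x {||}) (kids S)))"

lemma addl_Node: "addl x a (Node w Cs) =
  (if w = a then Node w (finsert (Node x {||}) Cs) else Node w (addl x a |`| Cs))"
  unfolding addl_def by simp

lemma addl_nin: "a \<notin> tverts T \<Longrightarrow> addl x a T = T"
proof (induction T)
  case (Node w Cs)
  have "w \<noteq> a" using Node.prems by (auto simp: tverts_Node)
  moreover have "addl x a |`| Cs = Cs"
  proof (rule fset.map_ident_strong)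
    fix C assume c: "C |\<in>| Cs"
    have "a \<notin> tverts C" using Node.prems kid_tverts_sub[OF c, of w] by blast
    thus "addl x a C = C" using Node.IH[OF c] by blast
  qed
  ultimately show ?case by (simp add: addl_Node)
qed

lemma root_addl[simp]: "root (addl x a T) = root T"
  by (cases T) (simp add: addl_Node)

lemma tverts_addl: "tverts (addl x a T) = (if a \<in> tverts T then insert x (tverts T) else tverts T)"
proof (induction T)
  case (Node w Cs)
  show ?case
  proof (cases "w = a")
    case True thus ?thesis by (auto simp: addl_Node tverts_Node)
  next
    case False
    have "tverts (addl x a (Node w Cs)) = insert w (\<Union>C\<in>fset Cs. tverts (addl x a C))"
      by (simp add: addl_Node False tverts_Node)
    also have "\<dots> = insert w (\<Union>C\<in>fset Cs. if a \<in> tverts C then insert x (tverts C) else tverts C)"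
      using Node.IH by simp
    also have "\<dots> = (if a \<in> tverts (Node w Cs) then insert x (tverts (Node w Cs)) else tverts (Node w Cs))"
      using False by (auto simp: tverts_Node split: if_splits)
    finally show ?thesis .
  qed
qed

lemma tverts_addl_in: "a \<in> tverts T \<Longrightarrow> tverts (addl x a T) = insert x (tverts T)"
  by (simp add: tverts_addl)

lemma addl_kids:
  assumes "dl (Node w Cs)" "C0 |\<in>| Cs" "a \<in> tverts C0"
  shows "addl x a |`| Cs = finsert (addl x a C0) (Cs |-| {|C0|})"
proof -
  have "addl x a |`| Cs = addl x a |`| finsert C0 (Cs |-| {|C0|})"
    using assms(2) by (simp add: finsert_fminus)
  also have "\<dots> = finsert (addl x a C0) (addl x a |`| (Cs |-| {|C0|}))" by (rule fimage_finsert)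
  also have "addl x a |`| (Cs |-| {|C0|}) = Cs |-| {|C0|}"
  proof (rule fset.map_ident_strong)
    fix C assume c: "C |\<in>| Cs |-| {|C0|}"
    have "a \<notin> tverts C" using dl_kid_eq[OF assms(1), of C C0 a] c assms(2,3) by auto
    thus "addl x a C = C" by (rule addl_nin)
  qed
  finally show ?thesis .
qed

primrec delx :: "'a \<Rightarrow> 'a rtree \<Rightarrow> 'a rtree" where
  "delx x (Node r Cs) = Node r (ffilter (\<lambda>C. root C \<noteq> x) (delx x |`| Cs))"

lemma ffilter_all: "(\<And>y. y |\<in>| A \<Longrightarrow> P y) \<Longrightarrow> ffilter P A = A"
  by (rule fset_eqI) auto

lemma ffilter_empty[simp]: "ffilter P {||} = {||}"
  by (rule fset_eqI) simp

lemma delx_nin: "x \<notin> tverts T \<Longrightarrow> delx x T = T"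
proof (induction T)
  case (Node w Cs)
  have m: "delx x |`| Cs = Cs"
  proof (rule fset.map_ident_strong)
    fix C assume c: "C |\<in>| Cs"
    have "x \<notin> tverts C" using Node.prems kid_tverts_sub[OF c, of w] by blast
    thus "delx x C = C" using Node.IH[OF c] by blast
  qed
  have f: "ffilter (\<lambda>C. root C \<noteq> x) Cs = Cs"
  proof (rule ffilter_all)
    fix C assume c: "C |\<in>| Cs"
    show "root C \<noteq> x" using Node.prems kid_tverts_sub[OF c, of w] root_in_tverts[of C] by blast
  qed
  show ?case using m f by simp
qed

lemma delx_addl: "x \<notin> tverts T \<Longrightarrow> delx x (addl x a T) = T"
proof (induction T)
  case (Node w Cs)
  have nx: "x \<notin> tverts C" if c: "C |\<in>| Cs" for C
    using Node.prems kid_tverts_sub[OF c, of w] by blast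
  have rx: "root C \<noteq> x" if c: "C |\<in>| Cs" for C
    using nx[OF c] root_in_tverts[of C] by blast
  show ?case
  proof (cases "w = a")
    case True
    have m: "delx x |`| Cs = Cs"
      by (rule fset.map_ident_strong) (simp add: delx_nin nx)
    have "ffilter (\<lambda>C. root C \<noteq> x) (finsert (Node x {||}) Cs) = Cs"
      by (rule fset_eqI) (auto dest: rx)
    thus ?thesis using m True by (simp add: addl_Node)
  next
    case False
    have m: "delx x |`| (addl x a |`| Cs) = Cs"
      unfolding fset.map_comp
      by (rule fset.map_ident_strong) (simp add: Node.IH nx)
    have f: "ffilter (\<lambda>C. root C \<noteq> x) Cs = Cs" by (rule ffilter_all) (simp add: rx)
    show ?thesis using m f False by (simp add: addl_Node)
  qed
qed

lemma tverts_split: "C |\<in>| Cs \<Longrightarrow> tverts (Node r Cs) = insert r (tverts C \<union> (\<Union>D\<in>fset (Cs |-| {|C|}). tverts D))"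
  by (auto simp: tverts_Node)

lemma rot_props: "rotation R u v T T' \<Longrightarrow> tverts T' = tverts T \<and> u \<in> tverts T \<and> v \<in> tverts T"
proof (induction rule: rotation.induct)
  case (at_u v Ds Cs u)
  have h1: "tverts (Node u Cs) = insert u (tverts (Node v Ds) \<union> (\<Union>D\<in>fset (Cs |-| {|Node v Ds|}). tverts D))"
    by (rule tverts_split[OF at_u])
  have h2: "tverts (Node v Ds) = insert v (\<Union>D\<in>fset Ds. tverts D)" by (rule tverts_Node)
  show ?case unfolding h1 h2 by (auto simp: tverts_Node)
next
  case (below C Cs u v C' w)
  have "tverts (Node w Cs) = insert w (tverts C \<union> (\<Union>D\<in>fset (Cs |-| {|C|}). tverts D))"
    by (rule tverts_split[OF below(1)])
  thus ?case using below.IH by (auto simp: tverts_Node)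
qed

lemma ffilter_cong': "(\<And>y. y |\<in>| A \<Longrightarrow> P y = Q y) \<Longrightarrow> ffilter P A = ffilter Q A"
  by (rule fset_eqI) auto

lemma rot_transfer:
  "rotation R1 u v T T' \<Longrightarrow> (\<And>p q. p \<in> tverts T \<Longrightarrow> q \<in> tverts T \<Longrightarrow> R1 p q = R2 p q) \<Longrightarrow> rotation R2 u v T T'"
proof (induction rule: rotation.induct)
  case (at_u v Ds Cs u)
  have s: "tverts (Node v Ds) \<subseteq> tverts (Node u Cs)" by (rule kid_tverts_sub[OF at_u(1)])
  have uT: "u \<in> tverts (Node u Cs)" by (simp add: tverts_Node)
  have eq: "touches R1 u S = touches R2 u S" if "S |\<in>| Ds" for S
  proof -
    have "tverts S \<subseteq> tverts (Node u Cs)" using s kid_tverts_sub[OF that, of v] by blast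
    thus ?thesis unfolding touches_def using at_u(2) uT by blast
  qed
  have f1: "ffilter (touches R1 u) Ds = ffilter (touches R2 u) Ds" by (rule ffilter_cong') (simp add: eq)
  have f2: "ffilter (\<lambda>S. \<not> touches R1 u S) Ds = ffilter (\<lambda>S. \<not> touches R2 u S) Ds"
    by (rule ffilter_cong') (simp add: eq)
  show ?case unfolding f1 f2 by (rule rotation.at_u[OF at_u(1)])
next
  case (below C Cs u v C' w)
  have "rotation R2 u v C C'"
    using below.IH below.prems kid_tverts_sub[OF below(1), of w] by (meson subsetD)
  thus ?case by (rule rotation.below[OF below(1)])
qed

lemma rot_det: "rotation R u v T T1 \<Longrightarrow> dl T \<Longrightarrow> rotation R u v T T2 \<Longrightarrow> T1 = T2"
proof (induction arbitrary: T2 rule: rotation.induct)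
  case (at_u v Ds Cs u)
  from at_u.prems(2) show ?case
  proof (cases rule: rotation.cases)
    case (at_u Ds2)
    have "v \<in> tverts (Node v Ds)" "v \<in> tverts (Node v Ds2)" by (simp_all add: tverts_Node)
    hence "Node v Ds2 = Node v Ds" using dl_kid_eq[OF at_u.prems(1) at_u(2)] \<open>Node v Ds |\<in>| Cs\<close> by blast
    thus ?thesis using at_u by simp
  next
    case (below C C')
    have "u \<in> tverts C" using rot_props[OF below(3)] by blast
    thus ?thesis using at_u.prems(1) below(2) unfolding dl_Node by blast
  qed
next
  case (below C Cs u v C' w)
  have uC: "u \<in> tverts C" using rot_props[OF below(2)] by blast
  from below.prems(2) show ?case
  proof (cases rule: rotation.cases)
    case (at_u Ds)
    thus ?thesis using below.prems(1) below(1) uC unfolding dl_Node by blast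
  next
    case (below C2 C2')
    have uC2: "u \<in> tverts C2" using rot_props[OF below(3)] by blast
    have "C2 = C" using dl_kid_eq[OF below.prems(1) below(2) \<open>C |\<in>| Cs\<close> uC2 uC] .
    moreover have "dl C" using below.prems(1) \<open>C |\<in>| Cs\<close> unfolding dl_Node by blast
    ultimately have "C' = C2'" using below.IH below(3) by blast
    thus ?thesis using below \<open>C2 = C\<close> by simp
  qed
qed

definition xleaf :: "'a \<Rightarrow> 'a rtree \<Rightarrow> bool" where
  "xleaf x S \<longleftrightarrow> (\<forall>Cs. subtree_of (Node x Cs) S \<longrightarrow> Cs = {||})"

lemma subtree_root: "subtree_of S T \<Longrightarrow> root S \<in> tverts T"
  unfolding tverts_def by blast

lemma rot_to_v: "rotation R u v T T' \<Longrightarrow> \<not> xleaf v T'"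
proof (induction rule: rotation.induct)
  case (at_u v Ds Cs u)
  show ?case unfolding xleaf_def using subtree_of.refl by fastforce
next
  case (below C Cs u v C' w)
  then obtain Cs2 where "subtree_of (Node v Cs2) C'" "Cs2 \<noteq> {||}" unfolding xleaf_def by blast
  hence "subtree_of (Node v Cs2) (Node w (finsert C' (Cs |-| {|C|})))"
    by (meson finsertI1 subtree_of.kid)
  thus ?case unfolding xleaf_def using \<open>Cs2 \<noteq> {||}\<close> by blast
qed

lemma xleaf_addl: "x \<notin> tverts T \<Longrightarrow> xleaf x (addl x a T)"
proof (induction T)
  case (Node w Cs)
  have wx: "w \<noteq> x" using Node.prems by (auto simp: tverts_Node)
  show ?case unfolding xleaf_def
  proof (intro allI impI)
    fix Cs2 assume st: "subtree_of (Node x Cs2) (addl x a (Node w Cs))"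
    show "Cs2 = {||}"
    proof (cases "w = a")
      case True
      hence "subtree_of (Node x Cs2) (Node w (finsert (Node x {||}) Cs))" using st by (simp add: addl_Node)
      then obtain C where c: "C |\<in>| finsert (Node x {||}) Cs" "subtree_of (Node x Cs2) C"
        using wx unfolding subtree_of_Node_iff by auto
      show ?thesis
      proof (cases "C = Node x {||}")
        case True
        hence "subtree_of (Node x Cs2) (Node x {||})" using c(2) by simp
        thus ?thesis unfolding subtree_of_Node_iff by auto
      next
        case False
        hence "C |\<in>| Cs" using c(1) by simp
        thus ?thesis using subtree_root[OF c(2)] Node.prems kid_tverts_sub[of C Cs w] by auto
      qed
    next
      case False
      hence "subtree_of (Node x Cs2) (Node w (addl x a |`| Cs))" using st by (simp add: addl_Node)
      then obtain C where c: "C |\<in>| Cs" "subtree_of (Node x Cs2) (addl x a C)"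
        using wx unfolding subtree_of_Node_iff by auto
      have "x \<notin> tverts C" using Node.prems kid_tverts_sub[OF c(1), of w] by blast
      hence "xleaf x (addl x a C)" using Node.IH[OF c(1)] by blast
      thus ?thesis using c(2) unfolding xleaf_def by blast
    qed
  qed
qed

lemma rot_path:
  "rotation R u v T T' \<Longrightarrow> path_to T a p \<Longrightarrow>
   \<exists>p'. path_to T' a p' \<and> set p - {u} \<subseteq> set p' \<and> (u \<in> set p \<longrightarrow> u \<notin> set p' \<longrightarrow> a = v \<or> \<not> R u a)"
proof (induction arbitrary: a p rule: rotation.induct)
  case (at_u v Ds Cs u)
  define N where "N = Node v Ds"
  define A where "A = ffilter (\<lambda>S. \<not> touches R u S) Ds"
  define B where "B = (Cs |-| {|N|}) |\<union>| ffilter (touches R u) Ds"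
  have T': "Node v (ffilter (\<lambda>S. \<not> touches R u S) Ds |\<union>|
               {| Node u ((Cs |-| {|Node v Ds|}) |\<union>| ffilter (touches R u) Ds) |}) = Node v (A |\<union>| {|Node u B|})"
    unfolding A_def B_def N_def by simp
  have kU: "Node u B |\<in>| A |\<union>| {|Node u B|}" by simp
  have pu: "path_to (Node v (A |\<union>| {|Node u B|})) u [v, u]"
    by (rule path_to.down[OF kU path_to.here])
  from at_u.prems have "(a = u \<and> p = [u]) \<or> (\<exists>C q. C |\<in>| Cs \<and> path_to C a q \<and> p = u # q)"
    unfolding path_to_Node .
  hence "\<exists>p'. path_to (Node v (A |\<union>| {|Node u B|})) a p' \<and> set p - {u} \<subseteq> set p' \<and> (u \<in> set p \<longrightarrow> u \<notin> set p' \<longrightarrow> a = v \<or> \<not> R u a)"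
  proof
    assume "a = u \<and> p = [u]"
    thus ?thesis using pu by (intro exI[of _ "[v, u]"]) auto
  next
    assume "\<exists>C q. C |\<in>| Cs \<and> path_to C a q \<and> p = u # q"
    then obtain C q where c: "C |\<in>| Cs" "path_to C a q" "p = u # q" by blast
    show ?thesis
    proof (cases "C = N")
      case True
      hence "path_to (Node v Ds) a q" using c(2) unfolding N_def by simp
      hence "(a = v \<and> q = [v]) \<or> (\<exists>D q2. D |\<in>| Ds \<and> path_to D a q2 \<and> q = v # q2)"
        unfolding path_to_Node .
      thus ?thesis
      proof
        assume "a = v \<and> q = [v]"
        thus ?thesis using c(3) path_to.here[of v "A |\<union>| {|Node u B|}"] by (intro exI[of _ "[v]"]) auto
      next
        assume "\<exists>D q2. D |\<in>| Ds \<and> path_to D a q2 \<and> q = v # q2"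
        then obtain D q2 where d: "D |\<in>| Ds" "path_to D a q2" "q = v # q2" by blast
        show ?thesis
        proof (cases "touches R u D")
          case True
          hence "D |\<in>| B" unfolding B_def using d(1) by simp
          hence "path_to (Node u B) a (u # q2)" using d(2) by (rule path_to.down)
          hence "path_to (Node v (A |\<union>| {|Node u B|})) a (v # u # q2)" using kU by (rule path_to.down[rotated])
          thus ?thesis using c(3) d(3) by (intro exI[of _ "v # u # q2"]) auto
        next
          case False
          hence "D |\<in>| A |\<union>| {|Node u B|}" unfolding A_def using d(1) by simp
          hence pa: "path_to (Node v (A |\<union>| {|Node u B|})) a (v # q2)" using d(2) by (rule path_to.down)
          have "a \<in> tverts D" using path_props[OF d(2)] by blast
          hence "\<not> R u a" using False unfolding touches_def by blast
          thus ?thesis using pa c(3) d(3) by (intro exI[of _ "v # q2"]) auto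
        qed
      qed
    next
      case False
      hence "C |\<in>| B" unfolding B_def using c(1) by simp
      hence "path_to (Node u B) a (u # q)" using c(2) by (rule path_to.down)
      hence "path_to (Node v (A |\<union>| {|Node u B|})) a (v # u # q)" using kU by (rule path_to.down[rotated])
      thus ?thesis using c(3) by (intro exI[of _ "v # u # q"]) auto
    qed
  qed
  thus ?case unfolding T' .
next
  case (below C Cs u v C' w)
  from below.prems have "(a = w \<and> p = [w]) \<or> (\<exists>C2 q. C2 |\<in>| Cs \<and> path_to C2 a q \<and> p = w # q)"
    unfolding path_to_Node .
  thus ?case
  proof
    assume "a = w \<and> p = [w]"
    thus ?thesis using path_to.here[of w "finsert C' (Cs |-| {|C|})"] by (intro exI[of _ "[w]"]) auto
  next
    assume "\<exists>C2 q. C2 |\<in>| Cs \<and> path_to C2 a q \<and> p = w # q"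
    then obtain C2 q where c: "C2 |\<in>| Cs" "path_to C2 a q" "p = w # q" by blast
    show ?thesis
    proof (cases "C2 = C")
      case True
      then obtain q' where q': "path_to C' a q'" "set q - {u} \<subseteq> set q'"
        "u \<in> set q \<longrightarrow> u \<notin> set q' \<longrightarrow> a = v \<or> \<not> R u a"
        using below.IH c(2) by blast
      have "path_to (Node w (finsert C' (Cs |-| {|C|}))) a (w # q')"
        by (rule path_to.down[OF _ q'(1)]) simp
      thus ?thesis using q' c(3) by (intro exI[of _ "w # q'"]) auto
    next
      case False
      hence "C2 |\<in>| finsert C' (Cs |-| {|C|})" using c(1) by simp
      hence "path_to (Node w (finsert C' (Cs |-| {|C|}))) a (w # q)" using c(2) by (rule path_to.down)
      thus ?thesis using c(3) by (intro exI[of _ "w # q"]) auto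
    qed
  qed
qed

lemma rot_path_v:
  "rotation R u v T T' \<Longrightarrow> dl T \<Longrightarrow> path_to T v p \<Longrightarrow> \<exists>p'. path_to T' u p' \<and> set p \<subseteq> set p'"
proof (induction arbitrary: p rule: rotation.induct)
  case (at_u v Ds Cs u)
  have vN: "v \<in> tverts (Node v Ds)" by (simp add: tverts_Node)
  have allk: "\<forall>C. C |\<in>| Cs \<longrightarrow> dl C \<and> u \<notin> tverts C" using dl_Node[THEN iffD1, OF at_u.prems(1)] by blast
  have dlN: "dl (Node v Ds)" and uN: "u \<notin> tverts (Node v Ds)" using allk at_u.hyps by blast+
  from at_u.prems(2) have "(v = u \<and> p = [u]) \<or> (\<exists>C q. C |\<in>| Cs \<and> path_to C v q \<and> p = u # q)"
    unfolding path_to_Node .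
  moreover have "v \<noteq> u" using vN uN by blast
  ultimately obtain C q where c: "C |\<in>| Cs" "path_to C v q" "p = u # q" by blast
  have vC: "v \<in> tverts C" using path_props[OF c(2)] by blast
  have "C = Node v Ds" using dl_kid_eq[OF at_u.prems(1) c(1) at_u.hyps vC vN] .
  hence "path_to (Node v Ds) v q" using c(2) by simp
  hence "(v = v \<and> q = [v]) \<or> (\<exists>D q2. D |\<in>| Ds \<and> path_to D v q2 \<and> q = v # q2)"
    unfolding path_to_Node .
  moreover have "\<not> (\<exists>D q2. D |\<in>| Ds \<and> path_to D v q2 \<and> q = v # q2)"
  proof
    assume "\<exists>D q2. D |\<in>| Ds \<and> path_to D v q2 \<and> q = v # q2"
    then obtain D q2 where d: "D |\<in>| Ds" "path_to D v q2" by blast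
    have "v \<in> tverts D" using path_props[OF d(2)] by blast
    thus False using dl_Node[THEN iffD1, OF dlN] d(1) by blast
  qed
  ultimately have qv: "q = [v]" by blast
  let ?B = "(Cs |-| {|Node v Ds|}) |\<union>| ffilter (touches R u) Ds"
  let ?A = "ffilter (\<lambda>S. \<not> touches R u S) Ds"
  have "path_to (Node v (?A |\<union>| {|Node u ?B|})) u [v, u]"
    by (rule path_to.down[OF _ path_to.here[of u ?B]]) simp
  thus ?case using c(3) qv by (intro exI[of _ "[v, u]"]) auto
next
  case (below C Cs u v C' w)
  have vC: "v \<in> tverts C" using rot_props[OF below.hyps(2)] by blast
  have dC: "dl C" and wC: "w \<notin> tverts C" using below.prems(1) below.hyps(1) unfolding dl_Node by blast+
  from below.prems(2) have "(v = w \<and> p = [w]) \<or> (\<exists>C2 q. C2 |\<in>| Cs \<and> path_to C2 v q \<and> p = w # q)"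
    unfolding path_to_Node .
  moreover have "v \<noteq> w" using vC wC by blast
  ultimately obtain C2 q where c: "C2 |\<in>| Cs" "path_to C2 v q" "p = w # q" by blast
  have vC2: "v \<in> tverts C2" using path_props[OF c(2)] by blast
  have "C2 = C" using dl_kid_eq[OF below.prems(1) c(1) below.hyps(1) vC2 vC] .
  then obtain q' where q': "path_to C' u q'" "set q \<subseteq> set q'" using below.IH dC c(2) by blast
  have "path_to (Node w (finsert C' (Cs |-| {|C|}))) u (w # q')"
    by (rule path_to.down[OF _ q'(1)]) simp
  thus ?case using q' c(3) by (intro exI[of _ "w # q'"]) auto
qed

lemma conn_of_comps: "components_on S R = {S} \<Longrightarrow> S \<noteq> {} \<Longrightarrow> connected_on S R"
  unfolding connected_on_def components_cls
proof (intro conjI ballI)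
  fix a b assume c: "cls S R ` S = {S}" "a \<in> S" "b \<in> S"
  have "cls S R a = S" using c by blast
  thus "reach_in S R a b" using c(3) unfolding cls_def by blast
qed

locale setting =
  fixes V :: "'a set" and E :: "'a \<Rightarrow> 'a \<Rightarrow> bool" and K :: "'a set" and x :: 'a
  assumes gr: "graph V E" and conn: "connected_on V E" and KV: "K \<subseteq> V" and Kne: "K \<noteq> {}"
    and cl: "is_clique K E" and xV: "x \<notin> V"
begin

abbreviation EK where "EK \<equiv> add_vertex_edges E K x"

lemma E_in: "E p q \<Longrightarrow> p \<in> V \<and> q \<in> V \<and> p \<noteq> q \<and> E q p"
  using gr unfolding graph_def by blast

lemma finV: "finite V" using gr unfolding graph_def by blast

lemma symE: "symp E" unfolding symp_def using E_in by blast

lemma symEK: "symp EK" unfolding add_vertex_edges_def symp_def using E_in by blast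

lemma xK: "x \<notin> K" using KV xV by blast

lemma EK_eq: "p \<noteq> x \<Longrightarrow> q \<noteq> x \<Longrightarrow> EK p q = E p q"
  unfolding add_vertex_edges_def by auto

lemma EK_x1: "p \<noteq> x \<Longrightarrow> EK p x = (p \<in> K)"
  unfolding add_vertex_edges_def using E_in xV by auto

lemma EK_x2: "q \<noteq> x \<Longrightarrow> EK x q = (q \<in> K)"
  unfolding add_vertex_edges_def using E_in xV by auto

lemma EK_xx: "\<not> EK x x"
  unfolding add_vertex_edges_def using E_in xV xK by auto

lemma E_EK: "E p q \<Longrightarrow> EK p q"
  unfolding add_vertex_edges_def by simp

lemma EK_agree: "p \<in> V \<Longrightarrow> q \<in> V \<Longrightarrow> E p q = EK p q"
  using EK_eq xV by metis

lemma clique: "k1 \<in> K \<Longrightarrow> k2 \<in> K \<Longrightarrow> k1 \<noteq> k2 \<Longrightarrow> E k1 k2"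
  using cl unfolding is_clique_def by blast

lemma st_EK: "search_tree E W T \<Longrightarrow> W \<subseteq> V \<Longrightarrow> search_tree EK W T"
  by (rule st_transfer) (use EK_agree in blast)+

lemma reach_lift: "reach_in S E a b \<Longrightarrow> reach_in (insert x S) EK a b"
  by (rule reach_mono[of S E a b "insert x S" EK]) (auto intro: E_EK)

lemma comps_EK: "x \<notin> S \<Longrightarrow> components_on S EK = components_on S E"
  by (rule comps_cong) (metis EK_eq)

lemma comp_iso:
  assumes S: "S \<subseteq> V" and KS: "K \<inter> S = {}"
  shows "components_on (insert x S) EK = insert {x} (components_on S E)"
proof (rule part_char)
  fix Q assume "Q \<in> insert {x} (components_on S E)"
  then consider "Q = {x}" | "Q \<in> components_on S E" by blast
  thus "Q \<noteq> {} \<and> Q \<subseteq> insert x S"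
  proof cases
    case 1 thus ?thesis by simp
  next
    case 2 thus ?thesis using comp_props(1)[OF symE 2] comp_props(2)[OF symE 2] by blast
  qed
next
  fix a assume a: "a \<in> insert x S"
  show "\<exists>Q\<in>insert {x} (components_on S E). a \<in> Q"
  proof (cases "a = x")
    case True thus ?thesis by blast
  next
    case False
    hence "a \<in> S" using a by simp
    thus ?thesis using comp_cover[of a S E] by blast
  qed
next
  fix Q a b assume q: "Q \<in> insert {x} (components_on S E)" "a \<in> Q" "EK a b" "b \<in> insert x S"
  show "b \<in> Q"
  proof (cases "Q = {x}")
    case True
    hence ax: "a = x" using q by simp
    show ?thesis
    proof (rule ccontr)
      assume "b \<notin> Q" hence bx: "b \<noteq> x" using True by simp
      hence "b \<in> K" using EK_x2[OF bx] q(3) ax by simp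
      moreover have "b \<in> S" using q(4) bx by simp
      ultimately show False using KS by blast
    qed
  next
    case False
    hence qc: "Q \<in> components_on S E" using q by simp
    have aS: "a \<in> S" using comp_props(2)[OF symE qc] q by blast
    hence ax: "a \<noteq> x" using S xV by blast
    show ?thesis
    proof (cases "b = x")
      case True
      thus ?thesis using q(3) EK_x1[OF ax] KS aS by blast
    next
      case False
      hence "E a b" "b \<in> S" using q EK_eq[OF ax False] by auto
      thus ?thesis using comp_props(4)[OF symE qc q(2)] by blast
    qed
  qed
next
  fix Q a b assume q: "Q \<in> insert {x} (components_on S E)" "a \<in> Q" "b \<in> Q"
  show "reach_in (insert x S) EK a b"
  proof (cases "Q = {x}")
    case True thus ?thesis using q by simp
  next
    case False
    hence qc: "Q \<in> components_on S E" using q by simp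
    show ?thesis using comp_props(5)[OF symE qc q(2,3)] by (rule reach_lift)
  qed
qed

lemma comp_add:
  assumes S: "S \<subseteq> V" and Q: "Q \<in> components_on S E" and KQ: "K \<inter> S \<subseteq> Q" and Kn: "K \<inter> S \<noteq> {}"
  shows "components_on (insert x S) EK = insert (insert x Q) (components_on S E - {Q})"
proof -
  obtain k where k: "k \<in> K" "k \<in> S" using Kn by blast
  have kQ: "k \<in> Q" using KQ k by blast
  have QS: "Q \<subseteq> S" using comp_props(2)[OF symE Q] .
  have kx: "k \<noteq> x" using k S xV by blast
  have xk: "reach_in (insert x S) EK x k" by (rule reach_step) (use EK_x2[OF kx] k in auto)
  have xc: "reach_in (insert x S) EK x c" if "c \<in> Q" for c
    using reach_trans[OF xk reach_lift[OF comp_props(5)[OF symE Q kQ that]]] .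
  show ?thesis
  proof (rule part_char)
    fix Q' assume "Q' \<in> insert (insert x Q) (components_on S E - {Q})"
    then consider "Q' = insert x Q" | "Q' \<in> components_on S E" by blast
    thus "Q' \<noteq> {} \<and> Q' \<subseteq> insert x S"
    proof cases
      case 1 thus ?thesis using QS by blast
    next
      case 2 thus ?thesis using comp_props(1)[OF symE 2] comp_props(2)[OF symE 2] by blast
    qed
  next
    fix a assume a: "a \<in> insert x S"
    show "\<exists>Q'\<in>insert (insert x Q) (components_on S E - {Q}). a \<in> Q'"
    proof (cases "a = x")
      case True thus ?thesis by (intro bexI[of _ "insert x Q"]) simp_all
    next
      case False
      hence "a \<in> S" using a by simp
      note cc = conjunct1[OF comp_cover[OF this, of E]] conjunct2[OF comp_cover[OF this, of E]]
      show ?thesis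
      proof (cases "cls S E a = Q")
        case True thus ?thesis using cc by (intro bexI[of _ "insert x Q"]) simp_all
      next
        case False thus ?thesis using cc by (intro bexI[of _ "cls S E a"]) simp_all
      qed
    qed
  next
    fix Q' a b assume q: "Q' \<in> insert (insert x Q) (components_on S E - {Q})" "a \<in> Q'" "EK a b" "b \<in> insert x S"
    show "b \<in> Q'"
    proof (cases "Q' = insert x Q")
      case True
      show ?thesis
      proof (cases "a = x")
        case ax: True
        hence "b \<noteq> x" using q(3) EK_xx by blast
        hence "b \<in> K \<inter> S" using q(3,4) ax EK_x2 by auto
        thus ?thesis using KQ True by blast
      next
        case ax: False
        hence aQ: "a \<in> Q" using q(2) True by blast
        show ?thesis
        proof (cases "b = x")
          case True thus ?thesis using \<open>Q' = insert x Q\<close> by simp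
        next
          case False
          hence "E a b" "b \<in> S" using q EK_eq[OF ax False] by auto
          thus ?thesis using comp_props(4)[OF symE Q aQ] True by blast
        qed
      qed
    next
      case False
      hence qc: "Q' \<in> components_on S E" "Q' \<noteq> Q" using q by auto
      have aS: "a \<in> S" using comp_props(2)[OF symE qc(1)] q by blast
      hence ax: "a \<noteq> x" using S xV by blast
      show ?thesis
      proof (cases "b = x")
        case True
        hence "a \<in> K" using q(3) EK_x1[OF ax] by blast
        hence "a \<in> Q" using KQ aS by blast
        hence "Q' = Q" using comp_disj[OF symE qc(1) Q q(2)] by blast
        thus ?thesis using qc(2) by blast
      next
        case False
        hence "E a b" "b \<in> S" using q EK_eq[OF ax False] by auto
        thus ?thesis using comp_props(4)[OF symE qc(1) q(2)] by blast
      qed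
    qed
  next
    fix Q' a b assume q: "Q' \<in> insert (insert x Q) (components_on S E - {Q})" "a \<in> Q'" "b \<in> Q'"
    show "reach_in (insert x S) EK a b"
    proof (cases "Q' = insert x Q")
      case True
      show ?thesis
      proof (cases "a = x")
        case ax: True
        show ?thesis
        proof (cases "b = x")
          case True thus ?thesis using ax by simp
        next
          case False thus ?thesis using ax xc q(3) \<open>Q' = insert x Q\<close> by blast
        qed
      next
        case ax: False
        hence aQ: "a \<in> Q" using q(2) True by blast
        show ?thesis
        proof (cases "b = x")
          case True thus ?thesis using reach_sym[OF symEK xc[OF aQ]] by simp
        next
          case False
          hence "b \<in> Q" using q(3) \<open>Q' = insert x Q\<close> by blast
          thus ?thesis using reach_lift[OF comp_props(5)[OF symE Q aQ]] by blast
        qed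
      qed
    next
      case False
      hence qc: "Q' \<in> components_on S E" using q by auto
      show ?thesis using reach_lift[OF comp_props(5)[OF symE qc q(2,3)]] .
    qed
  qed
qed

lemma conn_add:
  assumes "connected_on W E" "W \<subseteq> V" "K \<inter> W \<noteq> {}"
  shows "connected_on (insert x W) EK"
proof (rule conn_of_comps)
  have c: "components_on W E = {W}" by (rule comp_connected[OF assms(1)])
  have "components_on (insert x W) EK = insert (insert x W) (components_on W E - {W})"
    by (rule comp_add) (use assms c in auto)
  thus "components_on (insert x W) EK = {insert x W}" using c by simp
qed simp

end

lemma ffilter_finsert: "ffilter P (finsert a A) = (if P a then finsert a (ffilter P A) else ffilter P A)"
  by (rule fset_eqI) auto

lemma ffilter_fimage: "ffilter P (f |`| A) = f |`| ffilter (\<lambda>y. P (f y)) A"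
  by (rule fset_eqI) auto

lemma fimage_minus: "(\<And>D. D |\<in>| A \<Longrightarrow> f D = f C \<Longrightarrow> D = C) \<Longrightarrow> f |`| A |-| {|f C|} = f |`| (A |-| {|C|})"
  by (rule fset_eqI) auto

lemma addl_inj: "x \<notin> tverts C \<Longrightarrow> x \<notin> tverts D \<Longrightarrow> addl x a C = addl x a D \<Longrightarrow> C = D"
  by (metis delx_addl)

lemma tverts_leaf[simp]: "tverts (Node y {||}) = {y}"
  by (simp add: tverts_Node)

context setting begin

lemma touches_V: "tverts S \<subseteq> V \<Longrightarrow> u \<in> V \<Longrightarrow> touches EK u S = touches E u S"
  unfolding touches_def using EK_agree by blast

lemma touches_addl:
  assumes "tverts S \<subseteq> V" "u \<in> V" "a \<in> K" "u \<in> K \<Longrightarrow> u \<noteq> a"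
  shows "touches EK u (addl x a S) = touches E u S"
proof (cases "a \<in> tverts S")
  case True
  have ux: "u \<noteq> x" using assms(2) xV by blast
  have "touches EK u (addl x a S) = (EK u x \<or> touches EK u S)"
    unfolding touches_def tverts_addl_in[OF True] by blast
  also have "\<dots> = (u \<in> K \<or> touches E u S)" using EK_x1[OF ux] touches_V[OF assms(1,2)] by simp
  also have "\<dots> = touches E u S"
  proof -
    have "u \<in> K \<Longrightarrow> touches E u S" using clique[OF _ assms(3) assms(4)] True unfolding touches_def by blast
    thus ?thesis by blast
  qed
  finally show ?thesis .
next
  case False
  thus ?thesis using addl_nin[OF False] touches_V[OF assms(1,2)] by simp
qed

lemma fwd:
  "rotation E u v T T' \<Longrightarrow> dl T \<Longrightarrow> tverts T \<subseteq> V \<Longrightarrow> a \<in> K \<Longrightarrow> a \<in> tverts T \<Longrightarrow>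
   rotation EK u v (addl x a T) (addl x (if v = a \<and> u \<in> K then u else a) T')"
proof (induction rule: rotation.induct)
  case (at_u v Ds Cs u)
  define N where "N = Node v Ds"
  define X where "X = Node x ({||} :: 'a rtree fset)"
  define A where "A = ffilter (\<lambda>S. \<not> touches E u S) Ds"
  define F where "F = ffilter (touches E u) Ds"
  define B where "B = (Cs |-| {|N|}) |\<union>| F"
  have T': "Node v (ffilter (\<lambda>S. \<not> touches E u S) Ds |\<union>|
               {| Node u ((Cs |-| {|Node v Ds|}) |\<union>| ffilter (touches E u) Ds) |}) = Node v (A |\<union>| {|Node u B|})"
    unfolding A_def B_def F_def N_def by simp
  have NC: "N |\<in>| Cs" using at_u.hyps unfolding N_def .
  have tvT: "tverts (Node u Cs) \<subseteq> V" by (rule at_u.prems(2))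
  have uV: "u \<in> V" using tvT by (simp add: tverts_Node)
  have ux: "u \<noteq> x" using uV xV by blast
  have allk: "\<forall>C. C |\<in>| Cs \<longrightarrow> dl C \<and> u \<notin> tverts C" using dl_Node[THEN iffD1, OF at_u.prems(1)] by blast
  have uN: "u \<notin> tverts N" using allk NC by blast
  have dlN: "dl N" using allk NC by blast
  have vN: "v \<in> tverts N" unfolding N_def by (simp add: tverts_Node)
  have uv: "u \<noteq> v" using uN vN by blast
  have NV: "tverts N \<subseteq> V" using kid_tverts_sub[OF NC, of u] tvT by blast
  have vx: "v \<noteq> x" using vN NV xV by blast
  have CV: "tverts C \<subseteq> V" if "C |\<in>| Cs" for C using kid_tverts_sub[OF that, of u] tvT by blast
  have Cx: "x \<notin> tverts C" if "C |\<in>| Cs" for C using CV[OF that] xV by blast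
  have DV: "tverts D \<subseteq> V" if "D |\<in>| Ds" for D using kid_tverts_sub[OF that, of v] NV unfolding N_def by blast
  have uD: "u \<notin> tverts D" if "D |\<in>| Ds" for D using kid_tverts_sub[OF that, of v] uN unfolding N_def by blast
  have tE: "touches EK u D = touches E u D" if "D |\<in>| Ds" for D using touches_V[OF DV[OF that] uV] .
  have fA: "ffilter (\<lambda>S. \<not> touches EK u S) Ds = A" unfolding A_def by (rule ffilter_cong') (simp add: tE)
  have fF: "ffilter (touches EK u) Ds = F" unfolding F_def by (rule ffilter_cong') (simp add: tE)
  have XN: "X \<noteq> N" unfolding X_def N_def using vx by simp
  have addlu_A: "addl x u |`| A = A"
    by (rule fset.map_ident_strong) (simp add: A_def addl_nin uD)
  have addlT'u: "addl x u (Node v (A |\<union>| {|Node u B|})) = Node v (A |\<union>| {|Node u (finsert X B)|})"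
    using uv addlu_A by (simp add: addl_Node X_def)
  consider (au) "a = u" | (av) "a = v" | (ao) "a \<noteq> u" "a \<noteq> v" by blast
  thus ?case
  proof cases
    case au
    have ite: "(if v = a \<and> u \<in> K then u else a) = u" using au uv by simp
    have L: "addl x a (Node u Cs) = Node u (finsert X Cs)" using au by (simp add: addl_Node X_def)
    have "rotation EK u v (Node u (finsert X Cs))
      (Node v (ffilter (\<lambda>S. \<not> touches EK u S) Ds |\<union>|
               {| Node u ((finsert X Cs |-| {|Node v Ds|}) |\<union>| ffilter (touches EK u) Ds) |}))"
      by (rule rotation.at_u) (use NC N_def in simp)
    also have "(finsert X Cs |-| {|Node v Ds|}) |\<union>| ffilter (touches EK u) Ds = finsert X B"
      unfolding fF B_def using XN N_def by auto
    finally have R: "rotation EK u v (Node u (finsert X Cs)) (Node v (A |\<union>| {|Node u (finsert X B)|}))"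
      unfolding fA .
    show ?thesis unfolding L ite T' addlT'u by (rule R)
  next
    case av
    have L: "addl x a (Node u Cs) = Node u (finsert (Node v (finsert X Ds)) (Cs |-| {|N|}))"
    proof -
      have "addl x a (Node u Cs) = Node u (addl x a |`| Cs)" using av uv by (simp add: addl_Node)
      also have "addl x a |`| Cs = finsert (addl x a N) (Cs |-| {|N|})"
        by (rule addl_kids[OF at_u.prems(1) NC]) (use av vN in simp)
      also have "addl x a N = Node v (finsert X Ds)" using av unfolding N_def X_def by (simp add: addl_Node)
      finally show ?thesis .
    qed
    define N' where "N' = Node v (finsert X Ds)"
    have N'n: "\<not> N' |\<in>| Cs |-| {|N|}"
    proof
      assume "N' |\<in>| Cs |-| {|N|}"
      hence "x \<notin> tverts N'" using Cx by simp
      moreover have "x \<in> tverts N'" unfolding N'_def X_def by (simp add: tverts_Node)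
      ultimately show False by blast
    qed
    have rm: "finsert N' (Cs |-| {|N|}) |-| {|N'|} = Cs |-| {|N|}" using N'n by auto
    have tX: "touches EK u X = (u \<in> K)" unfolding touches_def X_def using EK_x1[OF ux] by simp
    have r0: "rotation EK u v (Node u (finsert (Node v (finsert X Ds)) (Cs |-| {|N|})))
      (Node v (ffilter (\<lambda>S. \<not> touches EK u S) (finsert X Ds) |\<union>|
               {| Node u ((finsert (Node v (finsert X Ds)) (Cs |-| {|N|}) |-| {|Node v (finsert X Ds)|}) |\<union>| ffilter (touches EK u) (finsert X Ds)) |}))"
      by (rule rotation.at_u) simp
    have rm': "finsert (Node v (finsert X Ds)) (Cs |-| {|N|}) |-| {|Node v (finsert X Ds)|} = Cs |-| {|N|}"
      using rm unfolding N'_def .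
    have R: "rotation EK u v (addl x a (Node u Cs))
      (Node v (ffilter (\<lambda>S. \<not> touches EK u S) (finsert X Ds) |\<union>|
               {| Node u ((Cs |-| {|N|}) |\<union>| ffilter (touches EK u) (finsert X Ds)) |}))"
      using r0 unfolding rm' L .
    show ?thesis
    proof (cases "u \<in> K")
      case True
      have ite: "(if v = a \<and> u \<in> K then u else a) = u" using av True by simp
      have "Node v (ffilter (\<lambda>S. \<not> touches EK u S) (finsert X Ds) |\<union>|
               {| Node u ((Cs |-| {|N|}) |\<union>| ffilter (touches EK u) (finsert X Ds)) |})
            = Node v (A |\<union>| {|Node u (finsert X B)|})"
        using True tX fA fF unfolding B_def by (auto simp: ffilter_finsert)
      thus ?thesis using R unfolding ite T' addlT'u by simp
    next
      case False
      have ite: "(if v = a \<and> u \<in> K then u else a) = v" using av False by simp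
      have "Node v (ffilter (\<lambda>S. \<not> touches EK u S) (finsert X Ds) |\<union>|
               {| Node u ((Cs |-| {|N|}) |\<union>| ffilter (touches EK u) (finsert X Ds)) |})
            = Node v (finsert X (A |\<union>| {|Node u B|}))"
        using False tX fA fF unfolding B_def by (auto simp: ffilter_finsert)
      moreover have "addl x v (Node v (A |\<union>| {|Node u B|})) = Node v (finsert X (A |\<union>| {|Node u B|}))"
        by (simp add: addl_Node X_def)
      ultimately show ?thesis using R unfolding ite T' by simp
    qed
  next
    case ao
    have ite: "(if v = a \<and> u \<in> K then u else a) = a" using ao by simp
    define f where "f = addl x a"
    have L: "addl x a (Node u Cs) = Node u (f |`| Cs)" using ao by (simp add: addl_Node f_def)
    have fN: "f N = Node v (f |`| Ds)" using ao unfolding f_def N_def by (simp add: addl_Node)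
    have fNC: "Node v (f |`| Ds) |\<in>| f |`| Cs" using NC fN by (metis fimageI)
    have R: "rotation EK u v (Node u (f |`| Cs))
      (Node v (ffilter (\<lambda>S. \<not> touches EK u S) (f |`| Ds) |\<union>|
               {| Node u ((f |`| Cs |-| {|Node v (f |`| Ds)|}) |\<union>| ffilter (touches EK u) (f |`| Ds)) |}))"
      by (rule rotation.at_u[OF fNC])
    have uKa: "u \<in> K \<Longrightarrow> u \<noteq> a" using ao by blast
    have tf: "touches EK u (f D) = touches E u D" if "D |\<in>| Ds" for D
      unfolding f_def using touches_addl[OF DV[OF that] uV at_u.prems(3) uKa] .
    have e1: "ffilter (\<lambda>S. \<not> touches EK u S) (f |`| Ds) = f |`| A"
      unfolding ffilter_fimage A_def by (rule arg_cong[where f="fimage f"], rule ffilter_cong') (simp add: tf)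
    have e2: "ffilter (touches EK u) (f |`| Ds) = f |`| F"
      unfolding ffilter_fimage F_def by (rule arg_cong[where f="fimage f"], rule ffilter_cong') (simp add: tf)
    have e3: "f |`| Cs |-| {|Node v (f |`| Ds)|} = f |`| (Cs |-| {|N|})"
      unfolding fN[symmetric]
    proof (rule fimage_minus)
      fix D assume "D |\<in>| Cs" "f D = f N"
      thus "D = N" using addl_inj[of x D N a] Cx NC unfolding f_def by blast
    qed
    have "addl x a (Node v (A |\<union>| {|Node u B|})) = Node v (f |`| A |\<union>| {|Node u (f |`| (Cs |-| {|N|}) |\<union>| f |`| F)|})"
      using ao unfolding B_def f_def by (simp add: addl_Node fimage_funion)
    thus ?thesis using R unfolding L ite T' e1 e2 e3 by simp
  qed
next
  case (below C Cs u v C' w)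
  define X where "X = Node x ({||} :: 'a rtree fset)"
  define a' where "a' = (if v = a \<and> u \<in> K then u else a)"
  have rp: "tverts C' = tverts C \<and> u \<in> tverts C \<and> v \<in> tverts C" using rot_props[OF below.hyps(2)] .
  have allk: "\<forall>D. D |\<in>| Cs \<longrightarrow> dl D \<and> w \<notin> tverts D" using dl_Node[THEN iffD1, OF below.prems(1)] by blast
  have dC: "dl C" and wC: "w \<notin> tverts C" using allk below.hyps(1) by blast+
  have tvT: "tverts (Node w Cs) \<subseteq> V" by (rule below.prems(2))
  have CV: "tverts D \<subseteq> V" if "D |\<in>| Cs" for D using kid_tverts_sub[OF that, of w] tvT by blast
  have Cx: "x \<notin> tverts D" if "D |\<in>| Cs" for D using CV[OF that] xV by blast
  have rotEK: "rotation EK u v C C'"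
    by (rule rot_transfer[OF below.hyps(2)]) (use EK_agree CV[OF below.hyps(1)] in blast)
  have "rotation EK u v (addl x a (Node w Cs)) (addl x a' (Node w (finsert C' (Cs |-| {|C|}))))"
  proof (cases "w = a")
    case True
    have a'a: "a' = a" unfolding a'_def using True wC rp by auto
    have L: "addl x a (Node w Cs) = Node w (finsert X Cs)" using True by (simp add: addl_Node X_def)
    have XC: "X \<noteq> C" using Cx[OF below.hyps(1)] unfolding X_def by (auto simp: tverts_Node)
    have "rotation EK u v (Node w (finsert X Cs)) (Node w (finsert C' (finsert X Cs |-| {|C|})))"
      by (rule rotation.below[OF _ rotEK]) (simp add: below.hyps(1))
    moreover have "finsert C' (finsert X Cs |-| {|C|}) = finsert X (finsert C' (Cs |-| {|C|}))"
      using XC by auto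
    moreover have "addl x a (Node w (finsert C' (Cs |-| {|C|}))) = Node w (finsert X (finsert C' (Cs |-| {|C|})))"
      using True by (simp add: addl_Node X_def)
    ultimately show ?thesis unfolding a'a L by simp
  next
    case False
    have L: "addl x a (Node w Cs) = Node w (addl x a |`| Cs)" using False by (simp add: addl_Node)
    show ?thesis
    proof (cases "a \<in> tverts C")
      case True
      have ih: "rotation EK u v (addl x a C) (addl x a' C')"
        using below.IH dC CV[OF below.hyps(1)] below.prems(3) True unfolding a'_def by blast
      have a'C: "a' \<in> tverts C" unfolding a'_def using rp True by auto
      have wa': "w \<noteq> a'" using a'C wC by blast
      have others: "a'' \<notin> tverts D" if "D |\<in>| Cs |-| {|C|}" "a'' \<in> tverts C" for D a''
      proof
        assume ad: "a'' \<in> tverts D"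
        have d: "D |\<in>| Cs" "D \<noteq> C" using that(1) by auto
        show False using dl_kid_eq[OF below.prems(1) d(1) below.hyps(1) ad that(2)] d(2) by blast
      qed
      have o1: "addl x a' |`| (Cs |-| {|C|}) = Cs |-| {|C|}"
        by (rule fset.map_ident_strong) (rule addl_nin, rule others[OF _ a'C])
      have o2: "addl x a |`| (Cs |-| {|C|}) = Cs |-| {|C|}"
        by (rule fset.map_ident_strong) (rule addl_nin, rule others[OF _ True])
      have m: "addl x a |`| Cs |-| {|addl x a C|} = addl x a |`| (Cs |-| {|C|})"
      proof (rule fimage_minus)
        fix D assume "D |\<in>| Cs" "addl x a D = addl x a C"
        thus "D = C" using addl_inj[of x D C a] Cx below.hyps(1) by blast
      qed
      have "rotation EK u v (Node w (addl x a |`| Cs)) (Node w (finsert (addl x a' C') (addl x a |`| Cs |-| {|addl x a C|})))"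
        by (rule rotation.below[OF _ ih]) (simp add: below.hyps(1))
      moreover have "addl x a' (Node w (finsert C' (Cs |-| {|C|}))) = Node w (finsert (addl x a' C') (Cs |-| {|C|}))"
        using wa' o1 by (simp add: addl_Node)
      ultimately show ?thesis unfolding L using m o2 by simp
    next
      case aC: False
      have a'a: "a' = a" unfolding a'_def using aC rp by auto
      have c1: "addl x a C = C" by (rule addl_nin[OF aC])
      have c2: "addl x a C' = C'" using addl_nin aC rp by metis
      have m: "addl x a |`| Cs |-| {|addl x a C|} = addl x a |`| (Cs |-| {|C|})"
      proof (rule fimage_minus)
        fix D assume "D |\<in>| Cs" "addl x a D = addl x a C"
        thus "D = C" using addl_inj[of x D C a] Cx below.hyps(1) by blast
      qed
      have CC: "C |\<in>| addl x a |`| Cs" using below.hyps(1) c1 by (metis fimageI)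
      have "rotation EK u v (Node w (addl x a |`| Cs)) (Node w (finsert C' (addl x a |`| Cs |-| {|C|})))"
        by (rule rotation.below[OF CC rotEK])
      moreover have "addl x a (Node w (finsert C' (Cs |-| {|C|}))) = Node w (finsert C' (addl x a |`| (Cs |-| {|C|})))"
        using False c2 by (simp add: addl_Node)
      ultimately show ?thesis unfolding L a'a using m c1 by simp
    qed
  qed
  thus ?case unfolding a'_def .
qed

end

lemma rot_single:
  "rotation R u v (Node y {|T|}) S \<Longrightarrow> (\<exists>Ds. T = Node v Ds \<and> root S = v) \<or> (\<exists>C'. rotation R u v T C' \<and> S = Node y {|C'|})"
  by (erule rotation.cases) auto

lemma rot_leaf: "\<not> rotation R u v (Node y {||}) S"
  by (auto elim: rotation.cases)

context setting begin

lemma exist: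
  "rotation EK u v S0 S \<Longrightarrow> S0 = addl x a T \<Longrightarrow> dl T \<Longrightarrow> tverts T \<subseteq> V \<Longrightarrow> v = x \<or> (\<exists>T''. rotation E u v T T'')"
proof (induction arbitrary: T rule: rotation.induct)
  case (at_u v Ds Cs u)
  obtain u' Cs' where T: "T = Node u' Cs'" by (cases T)
  show ?case
  proof (cases "u' = a")
    case True
    hence "Node u Cs = Node a (finsert (Node x {||}) Cs')" using at_u.prems(1) T by (simp add: addl_Node)
    hence uc: "u = a" "Cs = finsert (Node x {||}) Cs'" by auto
    hence "Node v Ds = Node x {||} \<or> Node v Ds |\<in>| Cs'" using at_u.hyps by auto
    thus ?thesis
    proof
      assume "Node v Ds = Node x {||}" thus ?thesis by simp
    next
      assume "Node v Ds |\<in>| Cs'"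
      hence "rotation E u' v (Node u' Cs') (Node v (ffilter (\<lambda>S. \<not> touches E u' S) Ds |\<union>|
               {| Node u' ((Cs' |-| {|Node v Ds|}) |\<union>| ffilter (touches E u') Ds) |}))"
        by (rule rotation.at_u)
      thus ?thesis using uc True T by blast
    qed
  next
    case False
    hence "Node u Cs = Node u' (addl x a |`| Cs')" using at_u.prems(1) T by (simp add: addl_Node)
    hence uc: "u = u'" "Cs = addl x a |`| Cs'" by auto
    then obtain D where D: "D |\<in>| Cs'" "Node v Ds = addl x a D" using at_u.hyps by auto
    obtain v' Ds' where D': "D = Node v' Ds'" by (cases D)
    have "root (Node v Ds) = root (addl x a D)" using D(2) by (rule arg_cong)
    hence "v' = v" using root_addl[of x a D] D' by simp
    hence "Node v Ds' |\<in>| Cs'" using D(1) D' by simp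
    hence "rotation E u' v (Node u' Cs') (Node v (ffilter (\<lambda>S. \<not> touches E u' S) Ds' |\<union>|
               {| Node u' ((Cs' |-| {|Node v Ds'|}) |\<union>| ffilter (touches E u') Ds') |}))"
      by (rule rotation.at_u)
    thus ?thesis using uc T by blast
  qed
next
  case (below C Cs u v C' w)
  obtain w' Cs' where T: "T = Node w' Cs'" by (cases T)
  have dT: "dl (Node w' Cs')" using below.prems(2) T by simp
  have allk: "\<forall>D. D |\<in>| Cs' \<longrightarrow> dl D \<and> w' \<notin> tverts D" using dl_Node[THEN iffD1, OF dT] by blast
  have tvT: "tverts (Node w' Cs') \<subseteq> V" using below.prems(3) T by simp
  have kV: "tverts D \<subseteq> V" if "D |\<in>| Cs'" for D using kid_tverts_sub[OF that, of w'] tvT by blast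
  show ?case
  proof (cases "w' = a")
    case True
    hence "Node w Cs = Node a (finsert (Node x {||}) Cs')" using below.prems(1) T by (simp add: addl_Node)
    hence wc: "w = a" "Cs = finsert (Node x {||}) Cs'" by auto
    have "C \<noteq> Node x {||}"
    proof
      assume "C = Node x {||}"
      thus False using below.hyps(2) rot_leaf[of EK u v x C'] by simp
    qed
    hence CC: "C |\<in>| Cs'" using below.hyps(1) wc by simp
    have "a \<notin> tverts C" using allk CC True by blast
    hence "C = addl x a C" using addl_nin by metis
    hence "v = x \<or> (\<exists>T''. rotation E u v C T'')" using below.IH allk CC kV by blast
    thus ?thesis
    proof
      assume "\<exists>T''. rotation E u v C T''"
      then obtain T'' where "rotation E u v C T''" by blast
      hence "rotation E u v (Node w' Cs') (Node w' (finsert T'' (Cs' |-| {|C|})))"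
        by (rule rotation.below[OF CC])
      thus ?thesis using T by blast
    qed simp
  next
    case False
    hence "Node w Cs = Node w' (addl x a |`| Cs')" using below.prems(1) T by (simp add: addl_Node)
    hence wc: "w = w'" "Cs = addl x a |`| Cs'" by auto
    then obtain D where D: "D |\<in>| Cs'" "C = addl x a D" using below.hyps(1) by auto
    hence "v = x \<or> (\<exists>T''. rotation E u v D T'')" using below.IH allk kV by blast
    thus ?thesis
    proof
      assume "\<exists>T''. rotation E u v D T''"
      then obtain T'' where "rotation E u v D T''" by blast
      hence "rotation E u v (Node w' Cs') (Node w' (finsert T'' (Cs' |-| {|D|})))"
        by (rule rotation.below[OF D(1)])
      thus ?thesis using T by blast
    qed simp
  qed
qed

lemma leaf_st: "search_tree EK {x} (Node x {||})"
proof (rule search_tree.intros)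
  show "connected_on {x} EK" unfolding connected_on_def by simp
  show "inj_on tverts (fset {||})" by simp
  show "tverts ` fset {||} = components_on ({x} - {x}) EK" by (simp add: components_on_def)
qed simp_all

lemma st_R0: assumes "search_tree E V T" shows "search_tree EK (insert x V) (Node x {|T|})"
proof (rule search_tree.intros)
  have tv: "tverts T = V" using st_basic[OF assms symE] by blast
  show "connected_on (insert x V) EK" by (rule conn_add[OF conn]) (use KV Kne in auto)
  show "x \<in> insert x V" by simp
  show "\<forall>C. C |\<in>| {|T|} \<longrightarrow> search_tree EK (tverts C) C" using st_EK[OF assms] tv by simp
  show "inj_on tverts (fset {|T|})" by simp
  have "insert x V - {x} = V" using xV by auto
  thus "tverts ` fset {|T|} = components_on (insert x V - {x}) EK"
    using comps_EK[OF xV] comp_connected[OF conn] tv by simp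
qed

lemma st_R1:
  "search_tree E W T \<Longrightarrow> W \<subseteq> V \<Longrightarrow> a \<in> K \<Longrightarrow> path_to T a p \<Longrightarrow> K \<inter> W \<subseteq> set p \<Longrightarrow>
   search_tree EK (insert x W) (addl x a T)"
proof (induction arbitrary: p rule: search_tree.induct)
  case (1 W r Cs)
  note h = "1"
  have stT: "search_tree E W (Node r Cs)"
    by (rule search_tree.intros[OF h(1) h(2) _ h(3) h(4)]) (use h(5) in blast)
  have bt: "tverts (Node r Cs) = W \<and> dl (Node r Cs)" using st_basic[OF stT symE] .
  have kidsub: "tverts C \<subseteq> W - {r}" if "C |\<in>| Cs" for C using comp_sub h(4) that by blast
  have kidV: "tverts C \<subseteq> V" if "C |\<in>| Cs" for C using kidsub[OF that] h(6) by blast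
  have kidx: "x \<notin> tverts C" if "C |\<in>| Cs" for C using kidV[OF that] xV by blast
  have kidst: "search_tree EK (tverts C) C" if "C |\<in>| Cs" for C
    using st_EK h(5) that kidV by blast
  have aW: "a \<in> W" using path_props[OF h(8)] bt by blast
  have connx: "connected_on (insert x W) EK" by (rule conn_add[OF h(1) h(6)]) (use aW h(7) in blast)
  have xW: "x \<notin> W" using h(6) xV by blast
  have rx: "r \<noteq> x" using h(2) xW by blast
  have X: "search_tree EK (tverts (Node x {||})) (Node x {||})" using leaf_st by simp
  show ?case
  proof (cases "r = a")
    case True
    have h8: "path_to (Node a Cs) a p" using h(8) True by simp
    have dla: "dl (Node a Cs)" using bt True by simp
    have pa: "p = [a]" using path_unique[OF h8 dla path_to.here] .
    have KW: "K \<inter> (W - {a}) = {}" using h(9) pa by auto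
    have eqT: "addl x a (Node r Cs) = Node a (finsert (Node x {||}) Cs)" using True by (simp add: addl_Node)
    show ?thesis unfolding eqT
    proof (rule search_tree.intros)
      show "connected_on (insert x W) EK" by (rule connx)
      show "a \<in> insert x W" using aW by simp
      show "\<forall>C. C |\<in>| finsert (Node x {||}) Cs \<longrightarrow> search_tree EK (tverts C) C" using X kidst by auto
      have nx: "tverts C \<noteq> {x}" if "C |\<in>| Cs" for C using kidx[OF that] by auto
      show "inj_on tverts (fset (finsert (Node x {||}) Cs))"
        using h(3) nx by (auto simp: inj_on_insert)
      have e: "insert x W - {a} = insert x (W - {a})" using aW xW by auto
      have ci: "components_on (insert x (W - {a})) EK = insert {x} (components_on (W - {a}) E)"
        by (rule comp_iso) (use h(6) KW in auto)
      show "tverts ` fset (finsert (Node x {||}) Cs) = components_on (insert x W - {a}) EK"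
        unfolding e ci using h(4) True by simp
    qed
  next
    case False
    obtain C0 q where c0: "C0 |\<in>| Cs" "path_to C0 a q" "p = r # q"
      using h(8) False unfolding path_to_Node by auto
    have aC0: "a \<in> tverts C0" using path_props[OF c0(2)] by blast
    have qC0: "set q \<subseteq> tverts C0" using path_props[OF c0(2)] by blast
    have Kq: "K \<inter> tverts C0 \<subseteq> set q"
    proof
      fix k assume k: "k \<in> K \<inter> tverts C0"
      hence "k \<in> W" "k \<noteq> r" using kidsub[OF c0(1)] by auto
      thus "k \<in> set q" using h(9) k c0(3) by auto
    qed
    have ih: "search_tree EK (insert x (tverts C0)) (addl x a C0)"
      using h(5) c0(1) kidV[OF c0(1)] h(7) c0(2) Kq by blast
    have tva: "tverts (addl x a C0) = insert x (tverts C0)" by (rule tverts_addl_in[OF aC0])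
    have eqT: "addl x a (Node r Cs) = Node r (finsert (addl x a C0) (Cs |-| {|C0|}))"
      using False addl_kids[OF conjunct2[OF bt] c0(1) aC0] by (simp add: addl_Node)
    define Q where "Q = tverts C0"
    have Qc: "Q \<in> components_on (W - {r}) E" using h(4) c0(1) unfolding Q_def by blast
    have KQ: "K \<inter> (W - {r}) \<subseteq> Q"
    proof
      fix k assume k: "k \<in> K \<inter> (W - {r})"
      hence "k \<in> set p" using h(9) by blast
      hence "k \<in> set q" using k c0(3) by auto
      thus "k \<in> Q" using qC0 unfolding Q_def by blast
    qed
    have Kn: "K \<inter> (W - {r}) \<noteq> {}" using aW h(7) False by blast
    have ca: "components_on (insert x (W - {r})) EK = insert (insert x Q) (components_on (W - {r}) E - {Q})"
      by (rule comp_add) (use h(6) Qc KQ Kn in auto)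
    have e: "insert x W - {r} = insert x (W - {r})" using rx by auto
    show ?thesis unfolding eqT
    proof (rule search_tree.intros)
      show "connected_on (insert x W) EK" by (rule connx)
      show "r \<in> insert x W" using h(2) by simp
      show "\<forall>C. C |\<in>| finsert (addl x a C0) (Cs |-| {|C0|}) \<longrightarrow> search_tree EK (tverts C) C"
        using ih tva kidst by auto
      have io: "inj_on tverts (fset (Cs |-| {|C0|}))" using h(3) by (rule inj_on_subset) auto
      have nx: "tverts C \<noteq> insert x (tverts C0)" if "C |\<in>| Cs" for C using kidx[OF that] by auto
      show "inj_on tverts (fset (finsert (addl x a C0) (Cs |-| {|C0|})))"
        using io nx tva by (auto simp: inj_on_insert)
      have im: "tverts ` fset (Cs |-| {|C0|}) = tverts ` fset Cs - {Q}"
      proof -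
        have "tverts ` (fset Cs - {C0}) = tverts ` fset Cs - tverts ` {C0}"
          by (rule inj_on_image_set_diff[OF h(3)]) (use c0(1) in auto)
        thus ?thesis unfolding Q_def by simp
      qed
      show "tverts ` fset (finsert (addl x a C0) (Cs |-| {|C0|})) = components_on (insert x W - {r}) EK"
        unfolding e ca using im tva h(4) unfolding Q_def by simp
    qed
  qed
qed

lemma vlam_exists:
  assumes "search_tree E V T" shows "\<exists>a p. a \<in> K \<and> path_to T a p \<and> K \<subseteq> set p"
proof -
  have bt: "tverts T = V \<and> dl T" using st_basic[OF assms symE] .
  have finK: "finite K" by (rule finite_subset[OF KV finV])
  define m where "m = Max (depth T ` K)"
  have "m \<in> depth T ` K" unfolding m_def using finK Kne by (intro Max_in) simp_all
  then obtain a where a: "a \<in> K" "depth T a = m" by blast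
  have aV: "a \<in> V" using a(1) KV by blast
  have "a \<in> tverts T" unfolding conjunct1[OF bt] by (rule aV)
  from path_exists[OF this] obtain p where p: "path_to T a p" by blast
  have "K \<subseteq> set p"
  proof
    fix k assume k: "k \<in> K"
    have kV: "k \<in> V" using k KV by blast
    show "k \<in> set p"
    proof (cases "k = a")
      case True thus ?thesis using path_props[OF p] last_in_set[of p] by simp
    next
      case False
      have "k \<in> tverts T" unfolding conjunct1[OF bt] by (rule kV)
      from path_exists[OF this] obtain pk where pk: "path_to T k pk" by blast
      have "E k a" using clique[OF k a(1) False] .
      hence c: "k \<in> set p \<or> a \<in> set pk" using comparable[OF assms symE _ kV aV pk p] by blast
      have "a \<notin> set pk"
      proof
        assume "a \<in> set pk"
        hence "depth T a < depth T k" using anc_depth[OF conjunct2[OF bt] pk] False by blast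
        moreover have "depth T k \<le> m" unfolding m_def using finK k by (intro Max_ge) auto
        ultimately show False using a(2) by simp
      qed
      thus ?thesis using c by blast
    qed
  qed
  thus ?thesis using a(1) p by blast
qed

lemma vlam_char:
  assumes "search_tree E V T" "a \<in> K" "path_to T a p" "K \<subseteq> set p"
  shows "v_lam K T = a \<and> lam K T = depth T a"
proof -
  have dlT: "dl T" using st_basic[OF assms(1) symE] by blast
  have finK: "finite K" by (rule finite_subset[OF KV finV])
  have lt: "depth T k < depth T a" if "k \<in> K" "k \<noteq> a" for k
    using anc_depth[OF dlT assms(3)] assms(4) that by blast
  have lam: "lam K T = depth T a" unfolding lam_def
  proof (rule Max_eqI)
    show "finite (depth T ` K)" using finK by simp
    show "y \<le> depth T a" if "y \<in> depth T ` K" for y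
    proof -
      obtain k where k: "k \<in> K" "y = depth T k" using \<open>y \<in> depth T ` K\<close> by blast
      show ?thesis using lt[OF k(1)] k(2) by (cases "k = a") auto
    qed
    show "depth T a \<in> depth T ` K" using assms(2) by simp
  qed
  have "v_lam K T = a" unfolding v_lam_def
  proof (rule the_equality)
    show "a \<in> K \<and> depth T a = lam K T" using assms(2) lam by simp
    show "u = a" if "u \<in> K \<and> depth T u = lam K T" for u
      using that lt[of u] lam by (cases "u = a") auto
  qed
  thus ?thesis using lam by simp
qed

lemma phi1:
  assumes "search_tree E V T"
  shows "\<exists>p. v_lam K T \<in> K \<and> path_to T (v_lam K T) p \<and> K \<subseteq> set p \<and>
     insertion T (lam K T + 1) x (v_lam K T) = addl x (v_lam K T) T"
proof -
  obtain a p where ap: "a \<in> K" "path_to T a p" "K \<subseteq> set p" using vlam_exists[OF assms] by blast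
  have vc: "v_lam K T = a" "lam K T = depth T a" using vlam_char[OF assms ap] by auto
  have "insertion T (lam K T + 1) x (v_lam K T) = addl x a T" unfolding insertion_def addl_def vc by simp
  thus ?thesis using ap vc by auto
qed

end

context setting begin

lemma R0_main: "induces_copy_of {insertion T 0 x (v_lam K T) | T. T \<in> rot_verts V E} (insert x V) EK V E"
proof -
  define \<phi> where "\<phi> = (\<lambda>T::'a rtree. Node x {|T|})"
  have set_eq: "{insertion T 0 x (v_lam K T) | T. T \<in> rot_verts V E} = \<phi> ` rot_verts V E"
    unfolding \<phi>_def insertion_def by auto
  have inR: "\<phi> T \<in> rot_verts (insert x V) EK" if "T \<in> rot_verts V E" for T
  proof -
    have "search_tree E V T" using that unfolding rot_verts_def by simp
    from st_R0[OF this] show ?thesis unfolding \<phi>_def rot_verts_def by simp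
  qed
  have inj: "inj_on \<phi> (rot_verts V E)" unfolding \<phi>_def inj_on_def by (auto dest: fsingleton_inject)
  have adj: "rot_adj V E T T' = rot_adj (insert x V) EK (\<phi> T) (\<phi> T')"
    if T: "T \<in> rot_verts V E" "T' \<in> rot_verts V E" for T T'
  proof
    have st: "search_tree E V T" using T(1) unfolding rot_verts_def by simp
    have tvT: "tverts T = V" using st_basic[OF st symE] by blast
    have ag: "E p q = EK p q" if "p \<in> tverts T" "q \<in> tverts T" for p q
      using EK_agree that tvT by simp
    have ag': "EK p q = E p q" if "p \<in> tverts T" "q \<in> tverts T" for p q
      using ag[OF that] by simp
    {
      assume "rot_adj V E T T'"
      then obtain u v where r: "rotation E u v T T'" unfolding rot_adj_def by blast
      have "rotation EK u v T T'" by (rule rot_transfer[OF r ag])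
      hence r1: "rotation EK u v (Node x {|T|}) (Node x (finsert T' ({|T|} |-| {|T|})))"
        by (rule rotation.below[rotated]) simp
      have e1: "finsert T' ({|T|} |-| {|T|}) = {|T'|}" by (rule fset_eqI) simp
      have r2: "rotation EK u v (\<phi> T) (\<phi> T')" using r1 unfolding \<phi>_def e1 .
      show "rot_adj (insert x V) EK (\<phi> T) (\<phi> T')" unfolding rot_adj_def
        by (intro conjI inR[OF T(1)] inR[OF T(2)] exI[of _ u] exI[of _ v] r2)
    }
    {
      assume "rot_adj (insert x V) EK (\<phi> T) (\<phi> T')"
      then obtain u v where r: "rotation EK u v (Node x {|T|}) (Node x {|T'|})"
        unfolding rot_adj_def \<phi>_def by blast
      from rot_single[OF r] have "rotation EK u v T T'"
      proof
        assume "\<exists>Ds. T = Node v Ds \<and> root (Node x {|T'|}) = v"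
        then obtain Ds where d1: "T = Node v Ds" and d2: "root (Node x {|T'|}) = v" by blast
        have "root T = x" using d1 d2 by simp
        hence "x \<in> tverts T" using root_in_tverts[of T] by simp
        hence False using tvT xV by blast
        thus ?thesis ..
      next
        assume "\<exists>C'. rotation EK u v T C' \<and> Node x {|T'|} = Node x {|C'|}"
        then obtain C' where "rotation EK u v T C'" "Node x {|T'|} = Node x {|C'|}" by blast
        thus ?thesis by (auto dest: fsingleton_inject)
      qed
      hence "rotation E u v T T'" by (rule rot_transfer[OF _ ag'])
      thus "rot_adj V E T T'" unfolding rot_adj_def using T by blast
    }
  qed
  show ?thesis unfolding induces_copy_of_def set_eq
  proof (intro conjI)
    show "\<phi> ` rot_verts V E \<subseteq> rot_verts (insert x V) EK" by (rule image_subsetI) (rule inR)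
    show "\<exists>\<phi>'. bij_betw \<phi>' (rot_verts V E) (\<phi> ` rot_verts V E) \<and>
        (\<forall>T\<in>rot_verts V E. \<forall>T'\<in>rot_verts V E. rot_adj V E T T' = rot_adj (insert x V) EK (\<phi>' T) (\<phi>' T'))"
      by (intro exI[of _ \<phi>] conjI inj_on_imp_bij_betw[OF inj] ballI adj)
  qed
qed

lemma R1_main: "induces_copy_of {insertion T (lam K T + 1) x (v_lam K T) | T. T \<in> rot_verts V E} (insert x V) EK V E"
proof -
  define \<phi> where "\<phi> = (\<lambda>T. insertion T (lam K T + 1) x (v_lam K T))"
  have set_eq: "{insertion T (lam K T + 1) x (v_lam K T) | T. T \<in> rot_verts V E} = \<phi> ` rot_verts V E"
    unfolding \<phi>_def by auto
  have info: "search_tree E V T \<and> tverts T = V \<and> dl T \<and> v_lam K T \<in> K \<and>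
      (\<exists>p. path_to T (v_lam K T) p \<and> K \<subseteq> set p) \<and> \<phi> T = addl x (v_lam K T) T"
    if TT: "T \<in> rot_verts V E" for T
  proof -
    have st: "search_tree E V T" using TT unfolding rot_verts_def by simp
    have b: "tverts T = V \<and> dl T" using st_basic[OF st symE] .
    obtain p where p: "v_lam K T \<in> K" "path_to T (v_lam K T) p" "K \<subseteq> set p"
      "insertion T (lam K T + 1) x (v_lam K T) = addl x (v_lam K T) T" using phi1[OF st] by blast
    show ?thesis using st b p unfolding \<phi>_def by blast
  qed
  have inR: "\<phi> T \<in> rot_verts (insert x V) EK" if TT: "T \<in> rot_verts V E" for T
  proof -
    have i: "search_tree E V T" "v_lam K T \<in> K" "\<phi> T = addl x (v_lam K T) T" using info[OF TT] by blast+
    obtain p where p: "path_to T (v_lam K T) p" "K \<subseteq> set p" using info[OF TT] by blast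
    have "search_tree EK (insert x V) (addl x (v_lam K T) T)"
      by (rule st_R1[OF i(1) subset_refl i(2) p(1)]) (use p(2) in blast)
    thus ?thesis unfolding rot_verts_def using i(3) by simp
  qed
  have dlphi: "dl (\<phi> T)" if TT: "T \<in> rot_verts V E" for T
  proof -
    have "search_tree EK (insert x V) (\<phi> T)" using inR[OF TT] unfolding rot_verts_def by simp
    thus ?thesis using st_basic[OF _ symEK] by blast
  qed
  have xnT: "x \<notin> tverts T" if TT: "T \<in> rot_verts V E" for T using info[OF TT] xV by simp
  have dx: "delx x (\<phi> T) = T" if TT: "T \<in> rot_verts V E" for T
  proof -
    have "\<phi> T = addl x (v_lam K T) T" using info[OF TT] by blast
    thus ?thesis using delx_addl[OF xnT[OF TT]] by simp
  qed
  have inj: "inj_on \<phi> (rot_verts V E)"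
  proof (rule inj_onI)
    fix T T' assume a: "T \<in> rot_verts V E" "T' \<in> rot_verts V E" "\<phi> T = \<phi> T'"
    show "T = T'" using dx[OF a(1)] dx[OF a(2)] a(3) by metis
  qed
  have fwd_adj: "rot_adj (insert x V) EK (\<phi> T) (\<phi> T')"
    if T: "T \<in> rot_verts V E" "T' \<in> rot_verts V E" and r: "rotation E u v T T'" for T T' u v
  proof -
    define a where "a = v_lam K T"
    have iT: "search_tree E V T" "tverts T = V" "dl T" "a \<in> K" "\<phi> T = addl x a T"
      using info[OF T(1)] unfolding a_def by blast+
    obtain p where p: "path_to T a p" "K \<subseteq> set p" using info[OF T(1)] unfolding a_def by blast
    have iT': "search_tree E V T'" "\<phi> T' = addl x (v_lam K T') T'" using info[OF T(2)] by blast+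
    have aT: "a \<in> tverts T" using path_props[OF p(1)] by blast
    define a' where "a' = (if v = a \<and> u \<in> K then u else a)"
    have R: "rotation EK u v (addl x a T) (addl x a' T')" unfolding a'_def
      by (rule fwd[OF r iT(3)]) (use iT(2,4) aT in auto)
    have a'K: "a' \<in> K" unfolding a'_def using iT(4) by auto
    have "\<exists>p'. path_to T' a' p' \<and> K \<subseteq> set p'"
    proof (cases "v = a \<and> u \<in> K")
      case True
      hence a'u: "a' = u" unfolding a'_def by simp
      have pv: "path_to T v p" using p(1) True by simp
      obtain p'' where "path_to T' u p''" "set p \<subseteq> set p''" using rot_path_v[OF r iT(3) pv] by blast
      thus ?thesis using p(2) a'u by blast
    next
      case False
      hence a'a: "a' = a" unfolding a'_def by (rule if_not_P)
      obtain p' where p': "path_to T' a p'" "set p - {u} \<subseteq> set p'"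
        "u \<in> set p \<longrightarrow> u \<notin> set p' \<longrightarrow> a = v \<or> \<not> E u a"
        using rot_path[OF r p(1)] by blast
      have "K \<subseteq> set p'"
      proof
        fix k assume k: "k \<in> K"
        show "k \<in> set p'"
        proof (cases "k = u")
          case False thus ?thesis using k p(2) p'(2) by blast
        next
          case True
          show ?thesis
          proof (rule ccontr)
            assume nu: "k \<notin> set p'"
            have up: "u \<in> set p" using k True p(2) by blast
            have "a \<in> set p'" using path_props[OF p'(1)] last_in_set by metis
            hence ua: "u \<noteq> a" using nu True by blast
            have "a = v \<or> \<not> E u a" using p'(3) up nu True by blast
            moreover have "a \<noteq> v" using False k True by blast
            moreover have "E u a" using clique k True iT(4) ua by blast
            ultimately show False by blast
          qed
        qed
      qed
      thus ?thesis using p'(1) a'a by blast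
    qed
    then obtain p' where p': "path_to T' a' p'" "K \<subseteq> set p'" by blast
    have "v_lam K T' = a'" using vlam_char[OF iT'(1) a'K p'] by blast
    hence "\<phi> T' = addl x a' T'" using iT'(2) by simp
    hence r2: "rotation EK u v (\<phi> T) (\<phi> T')" using R iT(5) by simp
    show ?thesis unfolding rot_adj_def
      by (intro conjI inR[OF T(1)] inR[OF T(2)] exI[of _ u] exI[of _ v] r2)
  qed
  have bwd_adj: "rot_adj V E T T'"
    if T: "T \<in> rot_verts V E" "T' \<in> rot_verts V E" and r: "rotation EK u v (\<phi> T) (\<phi> T')" for T T' u v
  proof -
    define a where "a = v_lam K T"
    have iT: "search_tree E V T" "tverts T = V" "dl T" "a \<in> K" "\<phi> T = addl x a T"
      using info[OF T(1)] unfolding a_def by blast+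
    obtain p where p: "path_to T a p" using info[OF T(1)] unfolding a_def by blast
    have aT: "a \<in> tverts T" using path_props[OF p] by blast
    have iT': "\<phi> T' = addl x (v_lam K T') T'" using info[OF T(2)] by blast
    have tvV: "tverts T \<subseteq> V" using iT(2) by simp
    have "v = x \<or> (\<exists>T''. rotation E u v T T'')" by (rule exist[OF r iT(5) iT(3) tvV])
    thus ?thesis
    proof
      assume "v = x"
      hence "\<not> xleaf x (\<phi> T')" using rot_to_v[OF r] by simp
      moreover have "xleaf x (\<phi> T')" unfolding iT' by (rule xleaf_addl[OF xnT[OF T(2)]])
      ultimately show ?thesis by blast
    next
      assume "\<exists>T''. rotation E u v T T''"
      then obtain T'' where r'': "rotation E u v T T''" by blast
      define a'' where "a'' = (if v = a \<and> u \<in> K then u else a)"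
      have R: "rotation EK u v (addl x a T) (addl x a'' T'')" unfolding a''_def
        by (rule fwd[OF r'' iT(3) tvV iT(4) aT])
      have r2: "rotation EK u v (addl x a T) (\<phi> T')" using r iT(5) by simp
      have dla: "dl (addl x a T)" using dlphi[OF T(1)] iT(5) by simp
      have eq: "addl x a'' T'' = \<phi> T'" by (rule rot_det[OF R dla r2])
      have "tverts T'' = tverts T" using rot_props[OF r''] by blast
      hence xT'': "x \<notin> tverts T''" using iT(2) xV by simp
      have "T'' = T'" using delx_addl[OF xT'', of a''] eq dx[OF T(2)] by simp
      thus ?thesis using r'' T unfolding rot_adj_def by blast
    qed
  qed
  have adj: "rot_adj V E T T' = rot_adj (insert x V) EK (\<phi> T) (\<phi> T')"
    if T: "T \<in> rot_verts V E" "T' \<in> rot_verts V E" for T T'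
  proof
    assume "rot_adj V E T T'"
    then obtain u v where "rotation E u v T T'" unfolding rot_adj_def by blast
    thus "rot_adj (insert x V) EK (\<phi> T) (\<phi> T')" using fwd_adj[OF T] by blast
  next
    assume "rot_adj (insert x V) EK (\<phi> T) (\<phi> T')"
    then obtain u v where "rotation EK u v (\<phi> T) (\<phi> T')" unfolding rot_adj_def by blast
    thus "rot_adj V E T T'" using bwd_adj[OF T] by blast
  qed
  show ?thesis unfolding induces_copy_of_def set_eq
  proof (intro conjI)
    show "\<phi> ` rot_verts V E \<subseteq> rot_verts (insert x V) EK" by (rule image_subsetI) (rule inR)
    show "\<exists>\<phi>'. bij_betw \<phi>' (rot_verts V E) (\<phi> ` rot_verts V E) \<and>
        (\<forall>T\<in>rot_verts V E. \<forall>T'\<in>rot_verts V E. rot_adj V E T T' = rot_adj (insert x V) EK (\<phi>' T) (\<phi>' T'))"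
      by (intro exI[of _ \<phi>] conjI inj_on_imp_bij_betw[OF inj] ballI adj)
  qed
qed

end

theorem proposition2p6:
  fixes V :: "'a set" and E :: "'a \<Rightarrow> 'a \<Rightarrow> bool" and K :: "'a set" and x :: 'a
  assumes "graph V E" and "connected_on V E"
    and "K \<subseteq> V" and "K \<noteq> {}" and "is_clique K E"
    and "x \<notin> V"
  defines "EK \<equiv> add_vertex_edges E K x"
    and "R0 \<equiv> {insertion T 0 x (v_lam K T) | T. T \<in> rot_verts V E}"
    and "R1 \<equiv> {insertion T (lam K T + 1) x (v_lam K T) | T. T \<in> rot_verts V E}"
  shows "induces_copy_of R0 (insert x V) EK V E \<and> induces_copy_of R1 (insert x V) EK V E"
proof -
  interpret setting V E K x by unfold_locales (fact assms)+
  show ?thesis unfolding EK_def R0_def R1_def using R0_main R1_main by simp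
qed

end
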